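(* Let $L>0$, $0<\gamma<1$, $\alpha>0$, let $K\ge 1$ be an integer and $\Delta t>0$, and put $\beta=\Gamma(2-\gamma)\,\Delta t^{\gamma}$ and $b_j=(j+1)^{1-\gamma}-j^{1-\gamma}$ for $j\ge 0$. Let $y^0\in L^2(0,L)$ and $u^1,\dots,u^{K}\in L^2(0,L)$. Suppose $y^1,\dots,y^{K}\in H_0^2(0,L)$ have $y^{j}_{xxxx}\in L^2(0,L)$ and satisfy, for every $g\in H_0^2(0,L)$, $$\langle y^{1},g\rangle+\beta\alpha\langle y^{1}_{xxxx},g\rangle=\langle y^{0},g\rangle+\beta\langle u^{1},g\rangle,$$ and, for $p=1,\dots,K-1$, $$\langle y^{p+1},g\rangle+\beta\alpha\langle y^{p+1}_{xxxx},g\rangle=(1-b_1)\langle y^{p},g\rangle+\sum_{j=1}^{p-1}(b_j-b_{j+1})\langle y^{p-j},g\rangle+b_p\langle y^{0},g\rangle+\beta\langle u^{p+1},g\rangle .$$ Then, for every $\Delta t>0$ (unconditional stability), $$\|y^{p+1}\|_{2}\le \|y^{0}\|_{0}+\beta\sum_{j=1}^{p+1}\|u^{j}\|_{0},\qquad p=0,1,\dots,K-1.$$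
   Context: This is the time-semidiscretization (L1 / backward Euler approximation of the Caputo derivative) of the fourth-order time-fractional equation $\partial_t^\gamma y+\alpha\,\partial_x^4 y=u(x,t)$ on $[0,L]\times[0,T]$. Here $\langle f,g\rangle=\int_0^L fg\,dx$ and $\|g\|_0=\langle g,g\rangle^{1/2}$ is the $L^2(0,L)$ norm. $H^2(0,L)=\{g\in L^2(0,L): g_x,g_{xx}\in L^2(0,L)\}$ and $H_0^2(0,L)=\{g\in H^2(0,L): g=0 \text{ and } g_x=0 \text{ at } x=0,L\}$. The norm $\|\cdot\|_2$ is defined by $\|g\|_2=\big(\|g\|_0^2+\beta\alpha\|g_{xx}\|_0^2\big)^{1/2}$. An empty sum (when $p=1$) is zero. *)

theory Defs
  imports "HOL-Analysis.Analysis"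
begin

text \<open>Functions on (0,L) are represented by their real-valued representatives;
  integrals are Lebesgue integrals over [0,L].\<close>

definition L2 :: "real \<Rightarrow> (real \<Rightarrow> real) \<Rightarrow> bool" where
  "L2 L f \<longleftrightarrow> f \<in> borel_measurable (lebesgue_on {0..L})
      \<and> integrable (lebesgue_on {0..L}) (\<lambda>x. (f x)^2)"

definition ip :: "real \<Rightarrow> (real \<Rightarrow> real) \<Rightarrow> (real \<Rightarrow> real) \<Rightarrow> real" where
  "ip L f g = (\<integral>x. f x * g x \<partial>(lebesgue_on {0..L}))"

definition norm0 :: "real \<Rightarrow> (real \<Rightarrow> real) \<Rightarrow> real" where
  "norm0 L g = sqrt (ip L g g)"

definition norm2 :: "real \<Rightarrow> real \<Rightarrow> real \<Rightarrow> (real \<Rightarrow> real) \<Rightarrow> (real \<Rightarrow> real) \<Rightarrow> real" where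
  "norm2 L \<beta> \<alpha> g gxx = sqrt ((norm0 L g)^2 + \<beta> * \<alpha> * (norm0 L gxx)^2)"

definition smooth_fun :: "(real \<Rightarrow> real) \<Rightarrow> bool" where
  "smooth_fun \<phi> \<longleftrightarrow> (\<forall>n x. ((deriv ^^ n) \<phi>) differentiable (at x))"

definition test_fun :: "real \<Rightarrow> (real \<Rightarrow> real) \<Rightarrow> bool" where
  "test_fun L \<phi> \<longleftrightarrow> smooth_fun \<phi> \<and>
     (\<exists>a b. 0 < a \<and> a \<le> b \<and> b < L \<and> (\<forall>x. x \<notin> {a..b} \<longrightarrow> \<phi> x = 0))"

definition loc_int :: "real \<Rightarrow> (real \<Rightarrow> real) \<Rightarrow> bool" where
  "loc_int L f \<longleftrightarrow> (\<forall>a b. 0 < a \<longrightarrow> b < L \<longrightarrow> integrable (lebesgue_on {a..b}) f)"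

definition weak_deriv :: "real \<Rightarrow> (real \<Rightarrow> real) \<Rightarrow> (real \<Rightarrow> real) \<Rightarrow> bool" where
  "weak_deriv L f f' \<longleftrightarrow> loc_int L f \<and> loc_int L f' \<and>
     (\<forall>\<phi>. test_fun L \<phi> \<longrightarrow>
        (\<integral>x. f x * deriv \<phi> x \<partial>(lebesgue_on {0..L})) = - (\<integral>x. f' x * \<phi> x \<partial>(lebesgue_on {0..L})))"

definition is_H2 :: "real \<Rightarrow> (real \<Rightarrow> real) \<Rightarrow> (real \<Rightarrow> real) \<Rightarrow> (real \<Rightarrow> real) \<Rightarrow> bool" where
  "is_H2 L g g1 g2 \<longleftrightarrow> L2 L g \<and> L2 L g1 \<and> L2 L g2 \<and> weak_deriv L g g1 \<and> weak_deriv L g1 g2"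

text \<open>g \<in> H_0^2(0,L): g and g_x vanish at 0 and L, evaluated on their
  continuous representatives (the traces).\<close>
definition is_H02 :: "real \<Rightarrow> (real \<Rightarrow> real) \<Rightarrow> (real \<Rightarrow> real) \<Rightarrow> (real \<Rightarrow> real) \<Rightarrow> bool" where
  "is_H02 L g g1 g2 \<longleftrightarrow> is_H2 L g g1 g2 \<and>
     (\<exists>G G1. continuous_on {0..L} G \<and> continuous_on {0..L} G1 \<and>
        (AE x in lebesgue_on {0..L}. G x = g x) \<and> (AE x in lebesgue_on {0..L}. G1 x = g1 x) \<and>
        G 0 = 0 \<and> G L = 0 \<and> G1 0 = 0 \<and> G1 L = 0)"

definition H02 :: "real \<Rightarrow> (real \<Rightarrow> real) set" where
  "H02 L = {g. \<exists>g1 g2. is_H02 L g g1 g2}"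

end

theory Submission
  imports Defs "HOL-Computational_Algebra.Polynomial"
begin


definition sm :: "nat \<Rightarrow> (real \<Rightarrow> real) \<Rightarrow> bool" where
  "sm n f \<longleftrightarrow> (\<forall>k<n. \<forall>x. (deriv ^^ k) f differentiable (at x))"

lemma smooth_fun_sm: "smooth_fun f \<longleftrightarrow> (\<forall>n. sm n f)"
  unfolding smooth_fun_def sm_def by (meson lessI)

lemma sm_0[simp]: "sm 0 f" by (simp add: sm_def)

lemma sm_Suc: "sm (Suc n) f \<longleftrightarrow> (\<forall>x. f differentiable (at x)) \<and> sm n (deriv f)"
proof -
  have e: "(deriv ^^ Suc k) f = (deriv ^^ k) (deriv f)" for k
    by (simp add: funpow_Suc_right del: funpow.simps)
  show ?thesis
    unfolding sm_def
    by (metis (no_types, lifting) e Suc_less_eq funpow_0 less_Suc_eq_0_disj zero_less_Suc)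
qed

lemma sm_mono: "sm (Suc n) f \<Longrightarrow> sm n f"
  by (simp add: sm_def)

lemma sm_mono': "sm n f \<Longrightarrow> m \<le> n \<Longrightarrow> sm m f"
  by (simp add: sm_def)

lemma sm_deriv_fun:
  assumes "\<And>x. (f has_real_derivative f' x) (at x)"
  shows "deriv f = f'"
  using assms DERIV_imp_deriv by blast

lemma sm_const: "sm n (\<lambda>x. c)"
proof (induction n arbitrary: c)
  case (Suc n)
  have "deriv (\<lambda>x. c) = (\<lambda>x. 0)" by (rule sm_deriv_fun) auto
  then show ?case using Suc by (simp add: sm_Suc)
qed simp

lemma sm_add: "sm n f \<Longrightarrow> sm n g \<Longrightarrow> sm n (\<lambda>x. f x + g x)"
proof (induction n arbitrary: f g)
  case (Suc n)
  then have df: "\<And>x. f differentiable (at x)" and dg: "\<And>x. g differentiable (at x)"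
    by (auto simp: sm_Suc)
  have "deriv (\<lambda>x. f x + g x) = (\<lambda>x. deriv f x + deriv g x)"
    by (rule sm_deriv_fun) (use df dg in \<open>auto intro!: derivative_eq_intros simp: DERIV_deriv_iff_real_differentiable[symmetric]\<close>)
  then show ?case using Suc df dg by (auto simp: sm_Suc)
qed simp

lemma sm_mult: "sm n f \<Longrightarrow> sm n g \<Longrightarrow> sm n (\<lambda>x. f x * g x)"
proof (induction n arbitrary: f g)
  case (Suc n)
  then have df: "\<And>x. f differentiable (at x)" and dg: "\<And>x. g differentiable (at x)"
    by (auto simp: sm_Suc)
  have "deriv (\<lambda>x. f x * g x) = (\<lambda>x. deriv f x * g x + f x * deriv g x)"
    by (rule sm_deriv_fun) (use df dg in \<open>auto intro!: derivative_eq_intros simp: DERIV_deriv_iff_real_differentiable[symmetric]\<close>)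
  moreover have "sm n (\<lambda>x. deriv f x * g x)"
    using Suc.IH[of "deriv f" g] Suc.prems sm_mono[of n g] by (simp add: sm_Suc)
  moreover have "sm n (\<lambda>x. f x * deriv g x)"
    using Suc.IH[of f "deriv g"] Suc.prems sm_mono[of n f] by (simp add: sm_Suc)
  ultimately show ?case using Suc df dg sm_add by (auto simp: sm_Suc intro: differentiable_mult)
qed simp

lemma sm_cmult: "sm n f \<Longrightarrow> sm n (\<lambda>x. c * f x)"
  using sm_mult[OF sm_const] by blast

lemma sm_diff: "sm n f \<Longrightarrow> sm n g \<Longrightarrow> sm n (\<lambda>x. f x - g x)"
  using sm_add[of n f "\<lambda>x. (-1) * g x"] sm_cmult[of n g "-1"] by simp

lemma sm_affine: "sm n f \<Longrightarrow> sm n (\<lambda>x. f (a * x + c))"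
proof (induction n arbitrary: f)
  case (Suc n)
  then have df: "\<And>x. f differentiable (at x)" by (auto simp: sm_Suc)
  have D: "((\<lambda>x. f (a * x + c)) has_real_derivative a * deriv f (a * x + c)) (at x)" for x
  proof -
    have "((\<lambda>x. a * x + c) has_real_derivative a) (at x)"
      by (auto intro!: derivative_eq_intros)
    from DERIV_chain2[OF _ this, of f "deriv f (a*x+c)"] df
    show ?thesis
      by (simp add: DERIV_deriv_iff_real_differentiable mult.commute)
  qed
  have dfc: "\<And>x. (\<lambda>x. f (a * x + c)) differentiable (at x)"
    using D real_differentiable_def by blast
  have "deriv (\<lambda>x. f (a * x + c)) = (\<lambda>x. a * deriv f (a * x + c))"
    by (rule sm_deriv_fun) (rule D)
  moreover have "sm n (\<lambda>x. deriv f (a * x + c))" using Suc by (auto simp: sm_Suc)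
  ultimately show ?case using dfc sm_cmult by (auto simp: sm_Suc)
qed simp

lemma sm_antideriv:
  assumes "\<And>x. (F has_real_derivative f x) (at x)" "sm n f"
  shows "sm (Suc n) F"
proof -
  have "deriv F = f" by (rule sm_deriv_fun) fact
  then show ?thesis using assms by (auto simp: sm_Suc real_differentiable_def)
qed

lemma sm_cont: "sm (Suc n) f \<Longrightarrow> continuous_on S f"
  by (meson continuous_at_imp_continuous_on differentiable_imp_continuous_within sm_Suc)


lemma poly_div_exp_0: "((\<lambda>t. poly P t / exp t) \<longlongrightarrow> (0::real)) at_top"
proof -
  have e: "poly P t / exp t = (\<Sum>i\<le>degree P. coeff P i * (t ^ i / exp t))" for t::real
    by (simp add: poly_altdef sum_divide_distrib)
  have "((\<lambda>t. \<Sum>i\<le>degree P. coeff P i * (t ^ i / exp t)) \<longlongrightarrow> (\<Sum>i\<le>degree P. coeff P i * (0::real))) at_top"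
    by (intro tendsto_sum tendsto_mult tendsto_const tendsto_power_div_exp_0)
  then show ?thesis by (simp add: e)
qed

definition Qf :: "real poly \<Rightarrow> real \<Rightarrow> real" where
  "Qf P x = (if x > 0 then poly P (1/x) * exp (-1/x) else 0)"

definition Tp :: "real poly \<Rightarrow> real poly" where
  "Tp P = [:0,0,1:] * (P - pderiv P)"

lemma Qf_deriv_pos:
  assumes "x > 0"
  shows "((\<lambda>x. poly P (1/x) * exp (-1/x)) has_real_derivative Qf (Tp P) x) (at x)"
proof -
  have "((\<lambda>x. poly P (1/x) * exp (-1/x)) has_real_derivative
        poly (pderiv P) (1/x) * (- 1 / x^2) * exp (-1/x) + poly P (1/x) * (exp (-1/x) * (1 / x^2))) (at x)"
    using assms
    by (auto intro!: derivative_eq_intros DERIV_chain2[OF poly_DERIV] simp: power2_eq_square)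
  moreover have "poly (pderiv P) (1/x) * (- 1 / x^2) * exp (-1/x) + poly P (1/x) * (exp (-1/x) * (1 / x^2))
      = Qf (Tp P) x"
    using assms by (simp add: Qf_def Tp_def algebra_simps power2_eq_square divide_simps)
  ultimately show ?thesis by simp
qed

lemma Qf_deriv: "(Qf P has_real_derivative Qf (Tp P) x) (at x)"
proof (cases "x > 0")
  case True
  show ?thesis
    apply (rule has_field_derivative_transform_within_open[where S="{0<..}", OF Qf_deriv_pos[OF True]])
    using True by (auto simp: Qf_def)
next
  case False
  show ?thesis
  proof (cases "x < 0")
    case True
    have "((\<lambda>x. 0) has_real_derivative 0) (at x)" by simp
    moreover have "Qf (Tp P) x = 0" using True by (simp add: Qf_def)
    ultimately show ?thesis
      apply (simp only:)
      apply (rule has_field_derivative_transform_within_open[where S="{..<0}"])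
      using True by (auto simp: Qf_def)
  next
    case False
    with \<open>\<not> x > 0\<close> have x0: "x = 0" by simp
    have "((\<lambda>y. (Qf P y - Qf P 0) / (y - 0)) \<longlongrightarrow> 0) (at (0::real))"
    proof (rule filterlim_split_at)
      show "((\<lambda>y. (Qf P y - Qf P 0) / (y - 0)) \<longlongrightarrow> 0) (at_left (0::real))"
      proof (rule tendsto_eventually)
        have "\<forall>\<^sub>F y in at_left (0::real). y < 0" by (auto simp: eventually_at_left_field intro!: exI[of _ "-1"])
        then show "\<forall>\<^sub>F y in at_left (0::real). (Qf P y - Qf P 0) / (y - 0) = 0"
          by eventually_elim (simp add: Qf_def)
      qed
      have lim: "((\<lambda>y. poly (pCons 0 P) (inverse y) / exp (inverse y)) \<longlongrightarrow> 0) (at_right (0::real))"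
        by (rule filterlim_compose[OF poly_div_exp_0 filterlim_inverse_at_top_right])
      show "((\<lambda>y. (Qf P y - Qf P 0) / (y - 0)) \<longlongrightarrow> 0) (at_right (0::real))"
      proof (rule tendsto_cong[THEN iffD1, OF _ lim])
        show "\<forall>\<^sub>F y in at_right 0. poly (pCons 0 P) (inverse y) / exp (inverse y) = (Qf P y - Qf P 0) / (y - 0)"
          using eventually_at_right_less[of "0::real"]
          by eventually_elim (auto simp: Qf_def exp_minus field_simps)
      qed
    qed
    then have "(Qf P has_real_derivative 0) (at 0)"
      by (simp add: has_field_derivative_iff)
    then show ?thesis using x0 by (simp add: Qf_def)
  qed
qed

lemma Qf_sm: "sm n (Qf P)"
proof (induction n arbitrary: P)
  case (Suc n)
  have "deriv (Qf P) = Qf (Tp P)" by (rule sm_deriv_fun) (rule Qf_deriv)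
  then show ?case using Suc Qf_deriv by (auto simp: sm_Suc real_differentiable_def)
qed simp

definition Ef :: "real \<Rightarrow> real" where "Ef = Qf 1"

lemma Ef_sm: "sm n Ef" unfolding Ef_def by (rule Qf_sm)
lemma Ef_pos: "x > 0 \<Longrightarrow> Ef x > 0" by (simp add: Ef_def Qf_def)
lemma Ef_zero: "x \<le> 0 \<Longrightarrow> Ef x = 0" by (simp add: Ef_def Qf_def)
lemma Ef_nonneg: "Ef x \<ge> 0" by (simp add: Ef_def Qf_def)


lemma integral_zero_on: "(\<And>x. x \<in> S \<Longrightarrow> f x = 0) \<Longrightarrow> integral S f = (0::real)"
  by (metis (mono_tags, lifting) Henstock_Kurzweil_Integration.integral_cong integral_0)

lemma antideriv:
  fixes f :: "real \<Rightarrow> real"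
  assumes cf: "continuous_on UNIV f" and z: "\<And>t. t \<le> c \<Longrightarrow> f t = 0"
  shows "((\<lambda>u. integral {c..u} f) has_real_derivative f x) (at x)"
proof -
  define c' where "c' = min c (x - 1)"
  have eq: "integral {c'..u} f = integral {c..u} f" for u
  proof (cases "u \<le> c")
    case True
    then show ?thesis by (subst integral_zero_on[of "{c'..u}"], simp add: z, subst integral_zero_on, auto simp: z)
  next
    case False
    have "integral {c'..c} f + integral {c..u} f = integral {c'..u} f"
      by (rule Henstock_Kurzweil_Integration.integral_combine)
         (use False in \<open>auto simp: c'_def intro!: integrable_continuous_interval continuous_on_subset[OF cf]\<close>)
    moreover have "integral {c'..c} f = 0" by (rule integral_zero_on) (auto simp: z)
    ultimately show ?thesis by simp
  qed
  have "((\<lambda>u. integral {c'..u} f) has_vector_derivative f x) (at x within {c'..x+1})"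
    by (rule integral_has_vector_derivative) (auto simp: c'_def intro!: continuous_on_subset[OF cf])
  moreover have "at x within {c'..x+1} = at x"
    by (rule at_within_Icc_at) (auto simp: c'_def)
  ultimately show ?thesis
    by (simp add: eq has_real_derivative_iff_has_vector_derivative)
qed

definition Bf :: "real \<Rightarrow> real" where "Bf x = Ef x * Ef (1 - x)"

lemma Bf_sm: "sm n Bf"
proof -
  have "sm n (\<lambda>x. Ef ((-1) * x + 1))" by (rule sm_affine) (rule Ef_sm)
  then have "sm n (\<lambda>x. Ef (1 - x))" by simp
  then show ?thesis unfolding Bf_def[abs_def] by (intro sm_mult Ef_sm)
qed

lemma Bf_cont: "continuous_on S Bf" by (rule sm_cont[OF Bf_sm])
lemma Bf_nonneg: "Bf x \<ge> 0" by (simp add: Bf_def Ef_nonneg)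
lemma Bf_zero: "x \<le> 0 \<or> x \<ge> 1 \<Longrightarrow> Bf x = 0" by (auto simp: Bf_def Ef_zero)
lemma Bf_pos: "0 < x \<Longrightarrow> x < 1 \<Longrightarrow> Bf x > 0" by (simp add: Bf_def Ef_pos)

lemma pos_integral_cont:
  fixes f :: "real \<Rightarrow> real"
  assumes "continuous_on {a..b} f" "\<And>x. x \<in> {a..b} \<Longrightarrow> f x \<ge> 0" "x0 \<in> {a..b}" "f x0 > 0" "a < b"
  shows "integral {a..b} f > 0"
proof -
  have "integral {a..b} f \<ge> 0"
    using assms by (intro Henstock_Kurzweil_Integration.integral_nonneg integrable_continuous_interval) auto
  moreover have "integral {a..b} f \<noteq> 0"
    using integral_eq_0_iff[of a b f] assms by auto
  ultimately show ?thesis by simp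
qed

definition mB :: real where "mB = integral {0..1} Bf"

lemma mB_pos: "mB > 0"
  unfolding mB_def
  by (rule pos_integral_cont[of 0 1 Bf "1/2"]) (auto simp: Bf_cont Bf_nonneg Bf_pos)

definition Sf :: "real \<Rightarrow> real" where "Sf x = integral {0..x} Bf / mB"

lemma Sf_deriv: "(Sf has_real_derivative Bf x / mB) (at x)"
  unfolding Sf_def[abs_def]
  by (intro DERIV_cdivide antideriv Bf_cont) (auto simp: Bf_zero)

lemma Sf_sm: "sm n Sf"
proof (cases n)
  case (Suc m)
  have "sm m (\<lambda>x. (1/mB) * Bf x)" by (rule sm_cmult) (rule Bf_sm)
  moreover have "\<And>x. (Sf has_real_derivative (1/mB) * Bf x) (at x)" using Sf_deriv by simp
  ultimately show ?thesis using Suc sm_antideriv[of Sf "\<lambda>x. 1 / mB * Bf x" m] by blast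
qed simp

lemma Sf_zero: "x \<le> 0 \<Longrightarrow> Sf x = 0"
  unfolding Sf_def by (subst integral_zero_on) (auto simp: Bf_zero)

lemma Sf_one: "x \<ge> 1 \<Longrightarrow> Sf x = 1"
proof -
  assume x: "x \<ge> 1"
  have "integral {0..1} Bf + integral {1..x} Bf = integral {0..x} Bf"
    by (rule Henstock_Kurzweil_Integration.integral_combine) (use x in \<open>auto intro!: integrable_continuous_interval Bf_cont\<close>)
  moreover have "integral {1..x} Bf = 0" by (rule integral_zero_on) (auto simp: Bf_zero)
  ultimately show ?thesis using mB_pos by (simp add: Sf_def mB_def)
qed

lemma Sf_mono: "x \<le> y \<Longrightarrow> Sf x \<le> Sf y"
  by (rule DERIV_nonneg_imp_nondecreasing[of x y Sf])
     (use Sf_deriv Bf_nonneg mB_pos in \<open>auto intro!: exI\<close>)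

lemma Sf_ge0: "Sf x \<ge> 0"
  using Sf_mono[of "min x 0" x] Sf_zero[of "min x 0"] by simp

lemma Sf_le1: "Sf x \<le> 1"
  using Sf_mono[of x "max x 1"] Sf_one[of "max x 1"] by simp

lemma test_funI:
  assumes "\<And>n. sm n \<phi>" "0 < a" "a \<le> b" "b < L" "\<And>x. x \<notin> {a..b} \<Longrightarrow> \<phi> x = 0"
  shows "test_fun L \<phi>"
  using assms unfolding test_fun_def smooth_fun_sm by blast


lemma intL_iff: "integrable (lebesgue_on {a..b}) f \<longleftrightarrow> f absolutely_integrable_on {a..b::real}"
  for f :: "real \<Rightarrow> real"
proof
  have S: "{a..b} \<in> sets lebesgue" by simp
  show "integrable (lebesgue_on {a..b}) f \<Longrightarrow> f absolutely_integrable_on {a..b}"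
    unfolding set_integrable_def using integrable_restrict_space[of "{a..b}" lebesgue f] S by simp
  show "f absolutely_integrable_on {a..b} \<Longrightarrow> integrable (lebesgue_on {a..b}) f"
    using absolutely_integrable_imp_integrable S by blast
qed

lemma LintHK: "integrable (lebesgue_on {a..b}) f \<Longrightarrow> (\<integral>x. f x \<partial>lebesgue_on {a..b}) = integral {a..b::real} f"
  for f :: "real \<Rightarrow> real"
  by (simp add: lebesgue_integral_eq_integral)

lemma AI_mult_cont:
  fixes f g :: "real \<Rightarrow> real"
  assumes "f absolutely_integrable_on {a..b}" "continuous_on {a..b} g"
  shows "(\<lambda>x. f x * g x) absolutely_integrable_on {a..b}"
proof -
  have "(\<lambda>x. g x * f x) absolutely_integrable_on {a..b}"
  proof (rule absolutely_integrable_bounded_measurable_product_real)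
    show "g \<in> borel_measurable (lebesgue_on {a..b})"
      by (rule continuous_imp_measurable_on_sets_lebesgue) (use assms in auto)
    show "bounded (g ` {a..b})"
      by (intro compact_imp_bounded compact_continuous_image assms) auto
  qed (use assms in auto)
  then show ?thesis by (simp add: mult.commute)
qed

lemma support_int:
  fixes F :: "real \<Rightarrow> real"
  assumes "F absolutely_integrable_on {a..b}" "{a..b} \<subseteq> {c..d}" "\<And>x. x \<notin> {a..b} \<Longrightarrow> F x = 0"
  shows "F absolutely_integrable_on {c..d}" "integrable (lebesgue_on {c..d}) F"
    "(\<integral>x. F x \<partial>lebesgue_on {c..d}) = integral {a..b} F" "integral {c..d} F = integral {a..b} F"
proof -
  have e: "(\<lambda>x. if x \<in> {a..b} then F x else 0) = F" using assms(3) by auto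
  have "(\<lambda>x. if x \<in> {a..b} then F x else 0) absolutely_integrable_on UNIV"
    by (subst absolutely_integrable_restrict_UNIV) (rule assms(1))
  then have U: "F absolutely_integrable_on UNIV" unfolding e .
  show A: "F absolutely_integrable_on {c..d}"
    by (rule absolutely_integrable_on_subinterval[OF U]) auto
  show I: "integrable (lebesgue_on {c..d}) F" using A intL_iff by blast
  have e2: "(\<lambda>x. if x \<in> {c..d} then F x else 0) = F"
  proof
    fix x show "(if x \<in> {c..d} then F x else 0) = F x"
      using assms(2) assms(3)[of x] by (cases "x \<in> {c..d}") auto
  qed
  have "integral {c..d} F = integral UNIV F"
    using integral_restrict_UNIV[of "{c..d}" F] unfolding e2 by simp
  also have "\<dots> = integral {a..b} F"
    using integral_restrict_UNIV[of "{a..b}" F] unfolding e by simp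
  finally show *: "integral {c..d} F = integral {a..b} F" .
  show "(\<integral>x. F x \<partial>lebesgue_on {c..d}) = integral {a..b} F"
    using LintHK[OF I] * by simp
qed

lemma locprod:
  fixes k g :: "real \<Rightarrow> real"
  assumes "loc_int L k" "0 < a" "a \<le> b" "b < L" "continuous_on UNIV g" "\<And>x. x \<notin> {a..b} \<Longrightarrow> g x = 0"
  shows "(\<lambda>x. k x * g x) absolutely_integrable_on {a..b}"
    "(\<lambda>x. k x * g x) absolutely_integrable_on {0..L}"
    "integrable (lebesgue_on {0..L}) (\<lambda>x. k x * g x)"
    "(\<integral>x. k x * g x \<partial>lebesgue_on {0..L}) = integral {a..b} (\<lambda>x. k x * g x)"
    "integral {0..L} (\<lambda>x. k x * g x) = integral {a..b} (\<lambda>x. k x * g x)"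
proof -
  have "k absolutely_integrable_on {a..b}" using assms(1-4) unfolding loc_int_def intL_iff by blast
  then show A: "(\<lambda>x. k x * g x) absolutely_integrable_on {a..b}"
    by (rule AI_mult_cont) (rule continuous_on_subset[OF assms(5)], simp)
  have sub: "{a..b} \<subseteq> {0..L}" using assms by auto
  have z: "\<And>x. x \<notin> {a..b} \<Longrightarrow> k x * g x = 0" using assms(6) by simp
  show "(\<lambda>x. k x * g x) absolutely_integrable_on {0..L}"
    "integrable (lebesgue_on {0..L}) (\<lambda>x. k x * g x)"
    "(\<integral>x. k x * g x \<partial>lebesgue_on {0..L}) = integral {a..b} (\<lambda>x. k x * g x)"
    "integral {0..L} (\<lambda>x. k x * g x) = integral {a..b} (\<lambda>x. k x * g x)"
    using support_int[OF A sub z] by auto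
qed


lemma AI_diff: "f absolutely_integrable_on {a..b} \<Longrightarrow> g absolutely_integrable_on {a..b} \<Longrightarrow>
   (\<lambda>x. f x - g x) absolutely_integrable_on {a..b::real}" for f g :: "real \<Rightarrow> real"
  by (simp add: intL_iff[symmetric])

lemma AI_add: "f absolutely_integrable_on {a..b} \<Longrightarrow> g absolutely_integrable_on {a..b} \<Longrightarrow>
   (\<lambda>x. f x + g x) absolutely_integrable_on {a..b::real}" for f g :: "real \<Rightarrow> real"
  by (simp add: intL_iff[symmetric])

lemma AI_cmult: "f absolutely_integrable_on {a..b} \<Longrightarrow>
   (\<lambda>x. c * f x) absolutely_integrable_on {a..b::real}" for f :: "real \<Rightarrow> real"
  by (simp add: intL_iff[symmetric])

lemma AI_cont: "continuous_on {a..b} f \<Longrightarrow> f absolutely_integrable_on {a..b::real}" for f :: "real \<Rightarrow> real"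
  by (rule absolutely_integrable_continuous_real)

lemma int_cmult: "f integrable_on S \<Longrightarrow> (\<lambda>x. c * f x) integrable_on S" for f :: "real \<Rightarrow> real"
  using integrable_on_cmult_left[of f S c] by simp

lemma AI_int: "f absolutely_integrable_on S \<Longrightarrow> f integrable_on S" for f :: "real \<Rightarrow> real"
  using absolutely_integrable_on_def by blast

lemma sm_all_cont: "(\<And>n. sm n \<phi>) \<Longrightarrow> continuous_on S \<phi>"
  using sm_cont by blast

lemma sm_all_deriv_cont: "(\<And>n. sm n \<phi>) \<Longrightarrow> continuous_on S (deriv \<phi>)"
proof -
  assume "\<And>n. sm n \<phi>"
  then have "sm (Suc 0) (deriv \<phi>)" using sm_Suc[of "Suc 0" \<phi>] by blast
  then show ?thesis by (rule sm_cont)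
qed

text \<open>Step 1 of the du Bois-Reymond lemma\<close>

locale dbr =
  fixes L :: real and k :: "real \<Rightarrow> real"
  assumes Lpos: "L > 0" and kloc: "loc_int L k"
    and H: "\<And>\<phi>. test_fun L \<phi> \<Longrightarrow> (\<integral>x. k x * deriv \<phi> x \<partial>lebesgue_on {0..L}) = 0"
begin

definition b0 :: "real \<Rightarrow> real" where "b0 x = Bf ((2/L) * x + (-1/2))"

lemma b0_sm: "sm n b0"
  unfolding b0_def[abs_def] by (rule sm_affine) (rule Bf_sm)

lemma b0_cont: "continuous_on S b0" by (rule sm_all_cont[OF b0_sm])

lemma b0_zero: "x \<notin> {L/4..3*L/4} \<Longrightarrow> b0 x = 0"
proof -
  assume "x \<notin> {L/4..3*L/4}"
  then have "x < L/4 \<or> x > 3*L/4" by auto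
  then have "(2/L) * x + (-1/2) \<le> 0 \<or> (2/L) * x + (-1/2) \<ge> 1"
    using Lpos by (auto simp: field_simps)
  then show ?thesis unfolding b0_def by (rule Bf_zero)
qed

lemma b0_nonneg: "b0 x \<ge> 0" by (simp add: b0_def Bf_nonneg)

definition J :: real where "J = integral {0..L} b0"

lemma J_pos: "J > 0"
  unfolding J_def
proof (rule pos_integral_cont[of 0 L b0 "L/2"])
  show "0 < b0 (L/2)" unfolding b0_def using Lpos by (intro Bf_pos) auto
qed (use Lpos in \<open>auto simp: b0_cont b0_nonneg\<close>)

definition C :: real where "C = integral {0..L} (\<lambda>x. k x * b0 x) / J"

lemma step1:
  assumes rho: "\<And>n. sm n \<rho>" and ab: "0 < a" "a \<le> b" "b < L" and z: "\<And>x. x \<notin> {a..b} \<Longrightarrow> \<rho> x = 0"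
  shows "integral {0..L} (\<lambda>x. k x * \<rho> x) = integral {0..L} \<rho> * C"
proof -
  define I where "I = integral {0..L} \<rho>"
  define r where "r x = \<rho> x - (I/J) * b0 x" for x
  define a' where "a' = min a (L/4)"
  define b' where "b' = max b (3*L/4)"
  have ab': "0 < a'" "a' \<le> b'" "b' < L" using ab Lpos by (auto simp: a'_def b'_def)
  have rz: "r x = 0" if "x \<notin> {a'..b'}" for x
  proof -
    have "x \<notin> {a..b}" "x \<notin> {L/4..3*L/4}" using that by (auto simp: a'_def b'_def)
    then show ?thesis using z b0_zero by (simp add: r_def)
  qed
  have rsm: "sm n r" for n
    unfolding r_def[abs_def] by (intro sm_diff sm_cmult rho b0_sm)
  have rc: "continuous_on S r" for S by (rule sm_all_cont[OF rsm])
  define \<psi> where "\<psi> x = integral {0..x} r" for x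
  have dpsi: "(\<psi> has_real_derivative r x) (at x)" for x
    unfolding \<psi>_def[abs_def] by (rule antideriv[OF rc]) (use rz ab' in auto)
  have psism: "sm n \<psi>" for n
  proof (cases n)
    case (Suc m) then show ?thesis using sm_antideriv[of \<psi> r m, OF dpsi rsm] by simp
  qed simp
  have rI: "integral {0..L} r = 0"
  proof -
    have "integral {0..L} r = integral {0..L} \<rho> - integral {0..L} (\<lambda>x. (I/J) * b0 x)"
      unfolding r_def
      by (rule Henstock_Kurzweil_Integration.integral_diff)
         (intro int_cmult integrable_continuous_interval sm_all_cont[OF rho] b0_cont)+
    also have "\<dots> = I - (I/J) * J" by (simp add: I_def J_def)
    finally show ?thesis using J_pos by simp
  qed
  have rAI: "r absolutely_integrable_on {a'..b'}" by (rule AI_cont[OF rc])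
  have psiz: "\<psi> x = 0" if "x \<notin> {a'..b'}" for x
  proof (cases "x < a'")
    case True
    then show ?thesis unfolding \<psi>_def by (intro integral_zero_on rz) auto
  next
    case False
    with that have x: "x > b'" by auto
    have "\<psi> x = integral {a'..b'} r"
      unfolding \<psi>_def by (rule support_int(4)[OF rAI]) (use x ab' rz in auto)
    also have "\<dots> = integral {0..L} r"
      by (rule support_int(4)[OF rAI, symmetric]) (use x ab' rz in auto)
    finally show ?thesis using rI by simp
  qed
  have tf: "test_fun L \<psi>" by (rule test_funI[OF psism ab' psiz])
  have dr: "deriv \<psi> = r" by (rule sm_deriv_fun[OF dpsi])
  have "0 = (\<integral>x. k x * r x \<partial>lebesgue_on {0..L})" using H[OF tf] by (simp add: dr)
  also have "\<dots> = integral {0..L} (\<lambda>x. k x * r x)"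
    using locprod(4,5)[OF kloc ab' rc rz] by simp
  also have "\<dots> = integral {0..L} (\<lambda>x. k x * \<rho> x) - integral {0..L} (\<lambda>x. (I/J) * (k x * b0 x))"
  proof -
    have i1: "(\<lambda>x. k x * \<rho> x) integrable_on {0..L}"
      using locprod(2)[OF kloc ab sm_all_cont[OF rho] z] AI_int by blast
    have b0ab: "0 < L/4" "L/4 \<le> 3*L/4" "3*L/4 < L" using Lpos by auto
    have i2: "(\<lambda>x. k x * b0 x) integrable_on {0..L}"
      using locprod(2)[OF kloc b0ab b0_cont b0_zero] AI_int by blast
    have "integral {0..L} (\<lambda>x. k x * r x) = integral {0..L} (\<lambda>x. k x * \<rho> x - (I/J) * (k x * b0 x))"
      by (simp add: r_def algebra_simps)
    also have "\<dots> = integral {0..L} (\<lambda>x. k x * \<rho> x) - integral {0..L} (\<lambda>x. (I/J) * (k x * b0 x))"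
      by (rule Henstock_Kurzweil_Integration.integral_diff[OF i1]) (rule int_cmult[OF i2])
    finally show ?thesis .
  qed
  also have "\<dots> = integral {0..L} (\<lambda>x. k x * \<rho> x) - I * C"
    using J_pos by (simp add: C_def)
  finally show ?thesis by (simp add: I_def)
qed

end


context dbr
begin

lemma eps_small:
  fixes e0 t :: real
  assumes "0 < t" "0 < e0"
  shows "\<exists>N. \<forall>n\<ge>N. e0 / (real n + 1) \<le> t"
proof -
  obtain N :: nat where N: "e0 / t < real N" using reals_Archimedean2 by blast
  have "e0 / (real n + 1) \<le> t" if "n \<ge> N" for n
  proof -
    have "e0 / t < real n + 1" using N that by linarith
    then have "e0 < t * (real n + 1)" using assms by (simp add: field_simps)
    then show ?thesis by (simp add: field_simps)
  qed
  then show ?thesis by blast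
qed

lemma step2:
  assumes cd: "0 < c" "c < d" "d < L"
  shows "integral {c..d} k = C * (d - c)"
proof -
  define e0 where "e0 = (L - d) / 2"
  have e0: "0 < e0" "d + e0 < L" using cd by (auto simp: e0_def field_simps)
  define S where "S = {c..d+e0}"
  define \<epsilon> where "\<epsilon> n = e0 / (real n + 1)" for n
  have epos: "\<epsilon> n > 0" for n using e0 by (simp add: \<epsilon>_def)
  have ele: "\<epsilon> n \<le> e0" for n using e0 by (simp add: \<epsilon>_def field_simps)
  define \<rho> where "\<rho> n x = Sf ((x - c) / \<epsilon> n) - Sf ((x - d) / \<epsilon> n)" for n x
  have arg: "(1/\<epsilon> n) * x + (-u/\<epsilon> n) = (x - u) / \<epsilon> n" for n x u
    by (simp add: diff_divide_distrib)
  have rsm: "sm m (\<rho> n)" for m n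
  proof -
    have "sm m (\<lambda>x. Sf ((1/\<epsilon> n) * x + (-c/\<epsilon> n)) - Sf ((1/\<epsilon> n) * x + (-d/\<epsilon> n)))"
      by (intro sm_diff sm_affine Sf_sm)
    then show ?thesis unfolding arg \<rho>_def[abs_def] .
  qed
  have rc: "continuous_on T (\<rho> n)" for T n by (rule sm_all_cont[OF rsm])
  have Sz: "Sf ((x - u) / \<epsilon> n) = 0" if "x \<le> u" for x u n
    using that epos[of n] by (intro Sf_zero) (simp add: divide_nonpos_pos)
  have So: "Sf ((x - u) / \<epsilon> n) = 1" if "x - u \<ge> \<epsilon> n" for x u n
    using that epos[of n] by (intro Sf_one) (simp add: field_simps)
  have rz: "\<rho> n x = 0" if "x \<notin> S" for n x
  proof (cases "x < c")
    case True then show ?thesis using cd by (simp add: \<rho>_def Sz)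
  next
    case False
    with that have x: "x > d + e0" by (auto simp: S_def)
    then have "x - d \<ge> \<epsilon> n" "x - c \<ge> \<epsilon> n" using ele[of n] cd by auto
    then show ?thesis by (simp add: \<rho>_def So)
  qed
  have rb: "norm (\<rho> n x) \<le> 1" for n x
    using Sf_ge0 Sf_le1 by (simp add: \<rho>_def abs_le_iff) (smt (verit) Sf_ge0 Sf_le1)
  define ind where "ind x = (if c < x \<and> x \<le> d then 1 else (0::real))" for x
  have rlim: "(\<lambda>n. \<rho> n x) \<longlonglongrightarrow> ind x" for x
  proof (cases "x \<le> c")
    case True
    then have "\<rho> n x = 0" for n using cd by (simp add: \<rho>_def Sz)
    then show ?thesis using True by (simp add: ind_def)
  next
    case False
    show ?thesis
    proof (cases "x \<le> d")
      case True
      obtain N where N: "\<forall>n\<ge>N. \<epsilon> n \<le> x - c" using eps_small[of "x - c" e0] False e0 by (auto simp: \<epsilon>_def)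
      have "\<forall>\<^sub>F n in sequentially. \<rho> n x = ind x"
        unfolding eventually_sequentially
        using N True False by (auto simp: \<rho>_def So Sz ind_def intro!: exI[of _ N])
      then show ?thesis by (rule tendsto_eventually)
    next
      case False2: False
      obtain N where N: "\<forall>n\<ge>N. \<epsilon> n \<le> x - d" using eps_small[of "x - d" e0] False2 e0 by (auto simp: \<epsilon>_def)
      have "\<forall>\<^sub>F n in sequentially. \<rho> n x = ind x"
        unfolding eventually_sequentially
      proof (intro exI[of _ N] allI impI)
        fix n assume "n \<ge> N"
        then have "\<epsilon> n \<le> x - d" "\<epsilon> n \<le> x - c" using N cd by force+
        then show "\<rho> n x = ind x" using False2 by (simp add: \<rho>_def So ind_def)
      qed
      then show ?thesis by (rule tendsto_eventually)
    qed
  qed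
  have DCT: "(\<lambda>n. integral S (\<lambda>x. g x * \<rho> n x)) \<longlonglongrightarrow> integral {c..d} g"
    if g: "g absolutely_integrable_on S" for g
  proof -
    have "(\<lambda>n. integral S (\<lambda>x. g x * \<rho> n x)) \<longlonglongrightarrow> integral S (\<lambda>x. g x * ind x)"
    proof (rule dominated_convergence(2))
      show "(\<lambda>x. g x * \<rho> n x) integrable_on S" for n
        using AI_mult_cont[where f=g and g="\<rho> n" and a=c and b="d+e0"] g rc by (simp add: S_def AI_int)
      show "(\<lambda>x. norm (g x)) integrable_on S" using g absolutely_integrable_on_def by blast
      show "norm (g x * \<rho> n x) \<le> norm (g x)" for n x
        using rb[of n x] by (simp add: abs_mult mult_left_le)
      show "(\<lambda>n. g x * \<rho> n x) \<longlonglongrightarrow> g x * ind x" for x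
        by (intro tendsto_mult tendsto_const rlim)
    qed
    also have "integral S (\<lambda>x. g x * ind x) = integral S (\<lambda>x. if x \<in> {c..d} then g x else 0)"
      by (rule integral_spike[of "{c}"]) (auto simp: ind_def)
    also have "\<dots> = integral ({c..d} \<inter> S) g" by (rule integral_restrict_Int)
    also have "{c..d} \<inter> S = {c..d}" using e0 by (auto simp: S_def)
    finally show ?thesis .
  qed
  have kS: "k absolutely_integrable_on S"
    using kloc cd e0 unfolding loc_int_def S_def intL_iff by auto
  have oS: "(\<lambda>x. 1::real) absolutely_integrable_on S"
    unfolding S_def by (rule AI_cont) (rule continuous_on_const)
  have ab: "0 < c" "c \<le> d + e0" "d + e0 < L" using cd e0 by auto
  have eq: "integral S (\<lambda>x. k x * \<rho> n x) = integral S (\<lambda>x. 1 * \<rho> n x) * C" for n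
  proof -
    have "integral S (\<lambda>x. k x * \<rho> n x) = integral {0..L} (\<lambda>x. k x * \<rho> n x)"
      using locprod(5)[OF kloc ab rc, of n] rz by (simp add: S_def)
    also have "\<dots> = integral {0..L} (\<rho> n) * C"
      by (rule step1[OF rsm ab]) (use rz in \<open>auto simp: S_def\<close>)
    also have "integral {0..L} (\<rho> n) = integral S (\<rho> n)"
      unfolding S_def by (rule support_int(4)[OF AI_cont[OF rc]]) (use rz ab in \<open>auto simp: S_def\<close>)
    finally show ?thesis by simp
  qed
  have l1: "(\<lambda>n. integral S (\<lambda>x. k x * \<rho> n x)) \<longlonglongrightarrow> integral {c..d} k" by (rule DCT[OF kS])
  have l2: "(\<lambda>n. integral S (\<lambda>x. 1 * \<rho> n x) * C) \<longlonglongrightarrow> integral {c..d} (\<lambda>x. 1) * C"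
    by (intro tendsto_mult tendsto_const DCT[OF oS])
  from LIMSEQ_unique[OF l1] l2 eq have "integral {c..d} k = integral {c..d} (\<lambda>x. 1) * C" by simp
  then show ?thesis using cd by simp
qed

end


context dbr
begin

lemma step3_local:
  fixes m :: nat
  shows "\<exists>N. negligible N \<and> (\<forall>x. x \<in> {L/(real m+3)<..<L - L/(real m+3)} \<and> x \<notin> N \<longrightarrow> k x = C)"
proof -
  define a where "a = L/(real m+3)"
  define b where "b = L - L/(real m+3)"
  have a0: "0 < a" using Lpos by (simp add: a_def)
  have "2 * a < L" using Lpos by (simp add: a_def field_simps add_pos_nonneg)
  then have ab: "0 < a" "a < b" "b < L" using a0 by (auto simp: b_def a_def[symmetric])
  define km where "km x = (if x \<in> {a..b} then k x - C else 0)" for x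
  have kAI: "k absolutely_integrable_on {a..b}"
    using kloc ab unfolding loc_int_def intL_iff by auto
  have "(\<lambda>x. k x - C) absolutely_integrable_on {a..b}"
    by (rule AI_diff[OF kAI]) (rule AI_cont, rule continuous_on_const)
  then have "km absolutely_integrable_on UNIV"
    unfolding km_def[abs_def] by (subst absolutely_integrable_restrict_UNIV)
  then have kmi: "km integrable_on cbox u v" for u v
    by (meson AI_int integrable_on_subcbox subset_UNIV)
  obtain N where N: "negligible N"
    and Nd: "\<And>x e. \<lbrakk>x \<notin> N; 0 < e\<rbrakk> \<Longrightarrow> \<exists>d>0. \<forall>h. 0 < h \<and> h < d \<longrightarrow>
               norm(integral (cbox x (x + h *\<^sub>R One)) km /\<^sub>R h ^ DIM(real) - km x) < e"
    using integrable_ccontinuous_explicit[of km] kmi by blast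
  have "k x = C" if x: "x \<in> {a<..<b}" "x \<notin> N" for x
  proof (rule ccontr)
    assume ne: "k x \<noteq> C"
    have kmx: "km x = k x - C" using x by (simp add: km_def)
    define e where "e = \<bar>k x - C\<bar>"
    have e: "e > 0" using ne by (simp add: e_def)
    obtain d where d: "d > 0" and dh: "\<And>h. 0 < h \<and> h < d \<Longrightarrow>
               norm(integral (cbox x (x + h *\<^sub>R One)) km /\<^sub>R h ^ DIM(real) - km x) < e"
      using Nd[OF x(2) e] by blast
    define h where "h = min (d/2) ((b - x)/2)"
    have "h \<le> (b - x)/2" unfolding h_def by (rule min.cobounded2)
    then have h: "0 < h" "h < d" "x + h < b" using d x by (auto simp: h_def)
    have "integral (cbox x (x + h *\<^sub>R One)) km = integral {x..x+h} (\<lambda>t. k t - C)"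
      by (simp add: cbox_interval) (rule Henstock_Kurzweil_Integration.integral_cong, use x h in \<open>auto simp: km_def\<close>)
    also have "\<dots> = integral {x..x+h} k - integral {x..x+h} (\<lambda>t. C)"
    proof (rule Henstock_Kurzweil_Integration.integral_diff)
      have "k absolutely_integrable_on {x..x+h}"
        using kloc x h ab unfolding loc_int_def intL_iff by auto
      then show "k integrable_on {x..x+h}" by (rule AI_int)
    qed (rule integrable_continuous_interval, rule continuous_on_const)
    also have "\<dots> = 0" using step2[of x "x+h"] x h ab by simp
    finally have "integral (cbox x (x + h *\<^sub>R One)) km = 0" .
    with dh[of h] h have "norm (km x) < e" by simp
    then show False by (simp add: kmx e_def)
  qed
  then show ?thesis using N by (auto simp: a_def b_def)
qed

lemma step3: "AE x in lebesgue_on {0..L}. k x = C"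
proof -
  obtain Nf :: "nat \<Rightarrow> real set" where Nf: "\<And>m::nat. negligible (Nf m) \<and> (\<forall>x. x \<in> {L/(real m+3)<..<L - L/(real m+3)} \<and> x \<notin> Nf m \<longrightarrow> k x = C)"
    using step3_local by metis
  define N where "N = insert 0 (insert L (\<Union>m. Nf m))"
  have negN: "negligible N" unfolding N_def using Nf by (auto intro!: negligible_Union_nat)
  have good: "k x = C" if "x \<in> {0..L}" "x \<notin> N" for x
  proof -
    have x: "0 < x" "x < L" using that by (auto simp: N_def)
    define t where "t = min x (L - x)"
    have t: "t > 0" using x by (simp add: t_def)
    obtain m :: nat where m: "L / t < real m" using reals_Archimedean2 by blast
    have "L / (real m + 3) < t"
    proof -
      have "L < t * real m" using m t by (simp add: field_simps)
      also have "\<dots> \<le> t * (real m + 3)" using t by simp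
      finally show ?thesis using t by (simp add: field_simps)
    qed
    then have "x \<in> {L/(real m+3)<..<L - L/(real m+3)}" by (auto simp: t_def)
    moreover have "x \<notin> Nf m" using that by (auto simp: N_def)
    ultimately show ?thesis using Nf[of m] by auto
  qed
  have "N \<inter> {0..L} \<in> null_sets (lebesgue_on {0..L})"
  proof (subst null_sets_restrict_space)
    have "negligible (N \<inter> {0..L})" using negN by (rule negligible_subset) auto
    then show "N \<inter> {0..L} \<subseteq> {0..L} \<and> N \<inter> {0..L} \<in> null_sets lebesgue"
      by (simp add: negligible_iff_null_sets)
  qed simp
  then show ?thesis
    by (rule AE_I') (use good in auto)
qed

end

lemma dbr_lemma:
  assumes "L > 0" "loc_int L k"
    "\<And>\<phi>. test_fun L \<phi> \<Longrightarrow> (\<integral>x. k x * deriv \<phi> x \<partial>lebesgue_on {0..L}) = 0"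
  shows "\<exists>C. AE x in lebesgue_on {0..L}. k x = C"
proof -
  interpret dbr L k using assms by unfold_locales
  show ?thesis using step3 by blast
qed


lemma int_combine_diff:
  fixes f :: "real \<Rightarrow> real"
  assumes "f integrable_on {a..b}" "a \<le> x" "x \<le> y" "y \<le> b"
  shows "integral {a..y} f - integral {a..x} f = integral {x..y} f"
proof -
  have "f integrable_on {a..y}" by (rule integrable_subinterval_real[OF assms(1)]) (use assms in auto)
  from Henstock_Kurzweil_Integration.integral_combine[OF assms(2,3) this] show ?thesis by simp
qed

locale ibp =
  fixes a b :: real and g \<phi> \<phi>' :: "real \<Rightarrow> real"
  assumes ab: "a \<le> b" and gAI: "g absolutely_integrable_on {a..b}"
    and dphi: "\<And>x. x \<in> {a..b} \<Longrightarrow> (\<phi> has_real_derivative \<phi>' x) (at x within {a..b})"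
    and cphi': "continuous_on {a..b} \<phi>'"
begin

definition G where "G x = integral {a..x} g" for x
definition A where "A x = integral {a..x} (\<lambda>t. \<bar>g t\<bar>)" for x

lemma gi: "g integrable_on {a..b}" using gAI AI_int by blast
lemma agi: "(\<lambda>t. \<bar>g t\<bar>) integrable_on {a..b}"
proof -
  have "(\<lambda>x. norm (g x)) integrable_on {a..b}" using gAI absolutely_integrable_on_def by blast
  then show ?thesis by simp
qed

lemma sub: "f integrable_on {a..b} \<Longrightarrow> a \<le> x \<Longrightarrow> y \<le> b \<Longrightarrow> f integrable_on {x..y}" for f :: "real \<Rightarrow> real"
  by (rule integrable_subinterval_real) auto

lemma Gc: "continuous_on {a..b} G" unfolding G_def[abs_def] by (rule indefinite_integral_continuous_1[OF gi])
lemma Ac: "continuous_on {a..b} A" unfolding A_def[abs_def] by (rule indefinite_integral_continuous_1[OF agi])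

lemma phic: "continuous_on {a..b} \<phi>"
  using dphi DERIV_continuous continuous_on_eq_continuous_within by blast

lemma gphi: "(\<lambda>t. g t * \<phi> t) integrable_on {a..b}"
  using AI_mult_cont[OF gAI phic] AI_int by blast

lemma Gphi': "(\<lambda>t. G t * \<phi>' t) integrable_on {a..b}"
  by (intro integrable_continuous_interval continuous_on_mult Gc cphi')

lemma phi'i: "\<phi>' integrable_on {a..b}"
  by (intro integrable_continuous_interval cphi')

lemma Mex: "\<exists>M\<ge>0. \<forall>x\<in>{a..b}. \<bar>\<phi>' x\<bar> \<le> M"
proof -
  have "bounded (\<phi>' ` {a..b})" by (intro compact_imp_bounded compact_continuous_image cphi') auto
  then obtain M where "\<forall>x\<in>{a..b}. norm (\<phi>' x) \<le> M" by (auto simp: bounded_iff)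
  then show ?thesis by (intro exI[of _ "max M 0"]) auto
qed

definition M where "M = (SOME M. M \<ge> 0 \<and> (\<forall>x\<in>{a..b}. \<bar>\<phi>' x\<bar> \<le> M))"

lemma M: "M \<ge> 0" "x \<in> {a..b} \<Longrightarrow> \<bar>\<phi>' x\<bar> \<le> M"
  using someI_ex[OF Mex] unfolding M_def by auto

lemma ftc: "a \<le> x \<Longrightarrow> x \<le> y \<Longrightarrow> y \<le> b \<Longrightarrow> integral {x..y} \<phi>' = \<phi> y - \<phi> x"
proof -
  assume xy: "a \<le> x" "x \<le> y" "y \<le> b"
  have "(\<phi>' has_integral (\<phi> y - \<phi> x)) {x..y}"
  proof (rule fundamental_theorem_of_calculus[OF xy(2)])
    fix t assume t: "t \<in> {x..y}"
    then have "(\<phi> has_real_derivative \<phi>' t) (at t within {a..b})" using xy by (intro dphi) auto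
    then have "(\<phi> has_real_derivative \<phi>' t) (at t within {x..y})" by (rule DERIV_subset) (use xy in auto)
    then show "(\<phi> has_vector_derivative \<phi>' t) (at t within {x..y})"
      by (simp add: has_real_derivative_iff_has_vector_derivative)
  qed
  then show ?thesis by (rule integral_unique)
qed

lemma lip: "t \<in> {a..b} \<Longrightarrow> y \<in> {a..b} \<Longrightarrow> t \<le> y \<Longrightarrow> \<bar>\<phi> y - \<phi> t\<bar> \<le> M * (y - t)"
proof -
  assume ty: "t \<in> {a..b}" "y \<in> {a..b}" "t \<le> y"
  have "\<bar>\<phi> y - \<phi> t\<bar> = norm (integral {t..y} \<phi>')" using ftc[of t y] ty by simp
  also have "\<dots> \<le> integral {t..y} (\<lambda>_. M)"
    by (rule integral_norm_bound_integral) (use ty M in \<open>auto intro!: sub[OF phi'i]\<close>)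
  also have "\<dots> = M * (y - t)" using ty by simp
  finally show ?thesis .
qed

lemma Gbound: "a \<le> x \<Longrightarrow> x \<le> t \<Longrightarrow> t \<le> y \<Longrightarrow> y \<le> b \<Longrightarrow> \<bar>G t - G x\<bar> \<le> A y - A x"
proof -
  assume xy: "a \<le> x" "x \<le> t" "t \<le> y" "y \<le> b"
  have "\<bar>G t - G x\<bar> = norm (integral {x..t} g)"
    using int_combine_diff[OF gi, of x t] xy by (simp add: G_def)
  also have "\<dots> \<le> integral {x..t} (\<lambda>s. \<bar>g s\<bar>)"
    by (rule integral_norm_bound_integral) (use xy in \<open>auto intro!: sub[OF gi] sub[OF agi]\<close>)
  also have "\<dots> \<le> integral {x..t} (\<lambda>s. \<bar>g s\<bar>) + integral {t..y} (\<lambda>s. \<bar>g s\<bar>)"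
    using xy by (simp add: Henstock_Kurzweil_Integration.integral_nonneg sub[OF agi])
  also have "\<dots> = integral {x..y} (\<lambda>s. \<bar>g s\<bar>)"
    by (rule Henstock_Kurzweil_Integration.integral_combine) (use xy in \<open>auto intro!: sub[OF agi]\<close>)
  also have "\<dots> = A y - A x" using int_combine_diff[OF agi, of x y] xy by (simp add: A_def)
  finally show ?thesis .
qed

definition D where "D u = G u * \<phi> u - integral {a..u} (\<lambda>t. G t * \<phi>' t) - integral {a..u} (\<lambda>t. g t * \<phi> t)" for u

lemma Dest:
  assumes xy: "a \<le> x" "x \<le> y" "y \<le> b"
  shows "\<bar>D y - D x\<bar> \<le> 2 * M * (y - x) * (A y - A x)"
proof -
  define T1 where "T1 = integral {x..y} (\<lambda>t. (G x - G t) * \<phi>' t)"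
  define T2 where "T2 = integral {x..y} (\<lambda>t. g t * (\<phi> y - \<phi> t))"
  have i1: "\<phi>' integrable_on {x..y}" "(\<lambda>t. G t * \<phi>' t) integrable_on {x..y}"
    "g integrable_on {x..y}" "(\<lambda>t. g t * \<phi> t) integrable_on {x..y}"
    using xy by (auto intro!: sub[OF phi'i] sub[OF Gphi'] sub[OF gi] sub[OF gphi])
  have "T1 = integral {x..y} (\<lambda>t. G x * \<phi>' t - G t * \<phi>' t)"
    unfolding T1_def by (simp add: algebra_simps)
  also have "\<dots> = G x * integral {x..y} \<phi>' - integral {x..y} (\<lambda>t. G t * \<phi>' t)"
    using i1 by (subst Henstock_Kurzweil_Integration.integral_diff) (auto intro: int_cmult)
  finally have T1: "T1 = G x * (\<phi> y - \<phi> x) - integral {x..y} (\<lambda>t. G t * \<phi>' t)"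
    using ftc[OF xy] by simp
  have "T2 = integral {x..y} (\<lambda>t. \<phi> y * g t - g t * \<phi> t)"
    unfolding T2_def by (simp add: algebra_simps)
  also have "\<dots> = \<phi> y * integral {x..y} g - integral {x..y} (\<lambda>t. g t * \<phi> t)"
    using i1 by (subst Henstock_Kurzweil_Integration.integral_diff) (auto intro: int_cmult)
  finally have T2: "T2 = \<phi> y * (G y - G x) - integral {x..y} (\<lambda>t. g t * \<phi> t)"
    using int_combine_diff[OF gi xy] by (simp add: G_def)
  have "D y - D x = T1 + T2"
    using int_combine_diff[OF Gphi' xy] int_combine_diff[OF gphi xy]
    by (simp add: D_def T1 T2 algebra_simps)
  moreover have "\<bar>T1\<bar> \<le> M * (y - x) * (A y - A x)"
  proof -
    have "norm T1 \<le> integral {x..y} (\<lambda>t. (A y - A x) * M)"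
      unfolding T1_def
    proof (rule integral_norm_bound_integral)
      show "(\<lambda>t. (G x - G t) * \<phi>' t) integrable_on {x..y}"
        by (intro integrable_continuous_interval continuous_on_mult continuous_on_diff continuous_on_const
              continuous_on_subset[OF Gc] continuous_on_subset[OF cphi']) (use xy in auto)
      fix t assume t: "t \<in> {x..y}"
      have "\<bar>G x - G t\<bar> \<le> A y - A x" using Gbound[of x t y] xy t by (simp add: abs_minus_commute)
      moreover have "\<bar>\<phi>' t\<bar> \<le> M" using M(2)[of t] xy t by simp
      ultimately show "norm ((G x - G t) * \<phi>' t) \<le> (A y - A x) * M"
        by (simp add: abs_mult mult_mono')
    qed (rule integrable_continuous_interval, rule continuous_on_const)
    then show ?thesis using xy by (simp add: algebra_simps)
  qed
  moreover have "\<bar>T2\<bar> \<le> M * (y - x) * (A y - A x)"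
  proof -
    have "norm T2 \<le> integral {x..y} (\<lambda>t. \<bar>g t\<bar> * (M * (y - x)))"
      unfolding T2_def
    proof (rule integral_norm_bound_integral)
      show "(\<lambda>t. g t * (\<phi> y - \<phi> t)) integrable_on {x..y}"
      proof -
        have "(\<lambda>t. \<phi> y * g t - g t * \<phi> t) integrable_on {x..y}"
          using i1 by (intro Henstock_Kurzweil_Integration.integrable_diff int_cmult)
        then show ?thesis by (simp add: algebra_simps)
      qed
      show "(\<lambda>t. \<bar>g t\<bar> * (M * (y - x))) integrable_on {x..y}"
      proof -
        have "(\<lambda>t. (M * (y - x)) * \<bar>g t\<bar>) integrable_on {x..y}"
          using xy by (intro int_cmult sub[OF agi]) auto
        then show ?thesis by (simp add: mult.commute)
      qed
      fix t assume t: "t \<in> {x..y}"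
      have "\<bar>\<phi> y - \<phi> t\<bar> \<le> M * (y - t)" using lip[of t y] xy t by auto
      also have "\<dots> \<le> M * (y - x)" using t M(1) by (simp add: mult_left_mono)
      finally show "norm (g t * (\<phi> y - \<phi> t)) \<le> \<bar>g t\<bar> * (M * (y - x))"
        by (simp add: abs_mult mult_left_mono)
    qed
    also have "\<dots> = integral {x..y} (\<lambda>t. \<bar>g t\<bar>) * (M * (y - x))"
      by simp
    also have "integral {x..y} (\<lambda>t. \<bar>g t\<bar>) = A y - A x"
      using int_combine_diff[OF agi xy] by (simp add: A_def)
    finally show ?thesis by (simp add: algebra_simps)
  qed
  ultimately show ?thesis by linarith
qed

lemma D_deriv: "x \<in> {a..b} \<Longrightarrow> (D has_real_derivative 0) (at x within {a..b})"
proof -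
  assume x: "x \<in> {a..b}"
  have "((\<lambda>y. (D y - D x) / (y - x)) \<longlongrightarrow> 0) (at x within {a..b})"
  proof (rule Lim_null_comparison)
    show "\<forall>\<^sub>F y in at x within {a..b}. norm ((D y - D x) / (y - x)) \<le> 2 * M * \<bar>A y - A x\<bar>"
      unfolding eventually_at_filter
    proof (rule always_eventually, intro allI impI)
      fix y assume y: "y \<noteq> x" "y \<in> {a..b}"
      have "\<bar>D y - D x\<bar> \<le> 2 * M * \<bar>y - x\<bar> * \<bar>A y - A x\<bar>"
      proof (cases "x \<le> y")
        case True then show ?thesis using Dest[of x y] Gbound[of x y y] x y by simp
      next
        case False then show ?thesis using Dest[of y x] Gbound[of y x x] x y by (simp add: abs_minus_commute)
      qed
      then show "norm ((D y - D x) / (y - x)) \<le> 2 * M * \<bar>A y - A x\<bar>"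
        using y by (simp add: abs_divide divide_le_eq mult.commute mult.left_commute)
    qed
    have "(A \<longlongrightarrow> A x) (at x within {a..b})" using Ac x continuous_on_def by blast
    then have "((\<lambda>y. 2 * M * \<bar>A y - A x\<bar>) \<longlongrightarrow> 2 * M * \<bar>A x - A x\<bar>) (at x within {a..b})"
      by (intro tendsto_intros)
    then show "((\<lambda>y. 2 * M * \<bar>A y - A x\<bar>) \<longlongrightarrow> 0) (at x within {a..b})" by simp
  qed
  then show ?thesis by (simp add: has_field_derivative_iff)
qed

lemma result: "integral {a..b} (\<lambda>t. g t * \<phi> t) = G b * \<phi> b - integral {a..b} (\<lambda>t. G t * \<phi>' t)"
proof -
  obtain c where c: "\<forall>x\<in>{a..b}. D x = c"
    using has_field_derivative_zero_constant[of "{a..b}" D] D_deriv by auto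
  have "D a = 0" by (simp add: D_def G_def)
  then have "D b = 0" using c ab by auto
  then show ?thesis by (simp add: D_def)
qed

end

lemma IBP:
  fixes g \<phi> \<phi>' :: "real \<Rightarrow> real"
  assumes "a \<le> b" "g absolutely_integrable_on {a..b}"
    "\<And>x. x \<in> {a..b} \<Longrightarrow> (\<phi> has_real_derivative \<phi>' x) (at x within {a..b})"
    "continuous_on {a..b} \<phi>'"
  shows "integral {a..b} (\<lambda>t. g t * \<phi> t) = integral {a..b} g * \<phi> b - integral {a..b} (\<lambda>t. integral {a..t} g * \<phi>' t)"
proof -
  interpret ibp a b g \<phi> \<phi>' using assms by unfold_locales
  show ?thesis using result by (simp add: G_def)
qed


lemma AE_neg:
  assumes "AE x in lebesgue_on {a..b::real}. P x"
  shows "\<exists>N. negligible N \<and> (\<forall>x\<in>{a..b}. x \<notin> N \<longrightarrow> P x)"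
proof -
  obtain N where N: "N \<in> null_sets (lebesgue_on {a..b})" "{x \<in> space (lebesgue_on {a..b}). \<not> P x} \<subseteq> N"
    using assms unfolding eventually_ae_filter by blast
  have S: "{a..b} \<in> sets lebesgue" by simp
  from N(1) have "N \<in> null_sets lebesgue" by (subst (asm) null_sets_restrict_space[OF S]) auto
  moreover have "\<forall>x\<in>{a..b}. x \<notin> N \<longrightarrow> P x" using N(2) by auto
  ultimately show ?thesis by (auto simp: negligible_iff_null_sets)
qed

lemma sm_DERIV: "(\<And>n. sm n \<phi>) \<Longrightarrow> (\<phi> has_real_derivative deriv \<phi> x) (at x)"
proof -
  assume "\<And>n. sm n \<phi>"
  then have "sm (Suc 0) \<phi>" by blast
  then have "\<phi> differentiable (at x)" unfolding sm_Suc by blast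
  then show ?thesis by (simp add: DERIV_deriv_iff_real_differentiable)
qed

lemma tf_props:
  assumes "test_fun L \<phi>"
  obtains a b where "0 < a" "a \<le> b" "b < L" "\<And>n. sm n \<phi>" "\<And>x. x \<notin> {a..b} \<Longrightarrow> \<phi> x = 0"
    "\<And>x. x \<notin> {a..b} \<Longrightarrow> deriv \<phi> x = 0"
proof -
  from assms have sm: "\<And>n. sm n \<phi>" unfolding test_fun_def smooth_fun_sm by blast
  from assms obtain a b where ab: "0 < a" "a \<le> b" "b < L" and z: "\<And>x. x \<notin> {a..b} \<Longrightarrow> \<phi> x = 0"
    unfolding test_fun_def by blast
  have dz: "deriv \<phi> x = 0" if x: "x \<notin> {a..b}" for x
  proof -
    have d1: "(\<phi> has_real_derivative deriv \<phi> x) (at x)" by (rule sm_DERIV[OF sm])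
    have d0: "((\<lambda>_. 0) has_real_derivative 0) (at x)" by simp
    have d2: "(\<phi> has_real_derivative 0) (at x)"
    proof (cases "x < a")
      case True
      show ?thesis
      proof (rule has_field_derivative_transform_within_open[OF d0, of "{..<a}"])
        fix y assume "y \<in> {..<a}" then have "y \<notin> {a..b}" by simp
        then show "0 = \<phi> y" using z by simp
      qed (use True in simp_all)
    next
      case False
      then have xb: "x > b" using x by simp
      show ?thesis
      proof (rule has_field_derivative_transform_within_open[OF d0, of "{b<..}"])
        fix y assume "y \<in> {b<..}" then have "y \<notin> {a..b}" by simp
        then show "0 = \<phi> y" using z by simp
      qed (use xb in simp_all)
    qed
    show ?thesis using DERIV_unique[OF d1 d2] .
  qed
  show ?thesis by (rule that[OF ab sm z dz])
qed

lemma WD_cong: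
  assumes wd: "weak_deriv L f f'" and ae: "AE x in lebesgue_on {0..L}. f' x = g x" and lg: "loc_int L g"
  shows "weak_deriv L f g"
  unfolding weak_deriv_def
proof (intro conjI allI impI)
  show "loc_int L f" "loc_int L g" using wd lg by (auto simp: weak_deriv_def)
  fix \<phi> assume tf: "test_fun L \<phi>"
  then obtain a b where ab: "0 < a" "a \<le> b" "b < L" and sm: "\<And>n. sm n \<phi>" and z: "\<And>x. x \<notin> {a..b} \<Longrightarrow> \<phi> x = 0"
    by (rule tf_props) blast
  have lf': "loc_int L f'" using wd by (simp add: weak_deriv_def)
  have "(\<integral>x. f' x * \<phi> x \<partial>lebesgue_on {0..L}) = (\<integral>x. g x * \<phi> x \<partial>lebesgue_on {0..L})"
  proof (rule integral_cong_AE)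
    show "(\<lambda>x. f' x * \<phi> x) \<in> borel_measurable (lebesgue_on {0..L})"
      using locprod(3)[OF lf' ab sm_all_cont[OF sm] z] by (rule borel_measurable_integrable)
    show "(\<lambda>x. g x * \<phi> x) \<in> borel_measurable (lebesgue_on {0..L})"
      using locprod(3)[OF lg ab sm_all_cont[OF sm] z] by (rule borel_measurable_integrable)
    show "AE x in lebesgue_on {0..L}. f' x * \<phi> x = g x * \<phi> x"
      using ae by eventually_elim simp
  qed
  moreover have "(\<integral>x. f x * deriv \<phi> x \<partial>lebesgue_on {0..L}) = - (\<integral>x. f' x * \<phi> x \<partial>lebesgue_on {0..L})"
    using wd tf unfolding weak_deriv_def by blast
  ultimately show "(\<integral>x. f x * deriv \<phi> x \<partial>lebesgue_on {0..L}) = - (\<integral>x. g x * \<phi> x \<partial>lebesgue_on {0..L})"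
    by simp
qed

lemma AI_loc: "g absolutely_integrable_on {0..L} \<Longrightarrow> loc_int L g"
  unfolding loc_int_def
proof (intro allI impI)
  fix a b :: real assume g: "g absolutely_integrable_on {0..L}" and "0 < a" "b < L"
  have "g absolutely_integrable_on {a..b}"
  proof (cases "a \<le> b")
    case True
    show ?thesis by (rule absolutely_integrable_on_subinterval[OF g]) (use True \<open>0 < a\<close> \<open>b < L\<close> in auto)
  next
    case False
    then have "{a..b} = {}" by simp
    then show ?thesis by (simp add: set_integrable_def)
  qed
  then show "integrable (lebesgue_on {a..b}) g" by (simp add: intL_iff)
qed

lemma REP0:
  assumes L: "L > 0" and wd: "weak_deriv L f g" and gAI: "g absolutely_integrable_on {0..L}"
  shows "\<exists>c. AE x in lebesgue_on {0..L}. f x = c + integral {0..x} g"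
proof -
  define G where "G x = integral {0..x} g" for x
  have Gc: "continuous_on {0..L} G"
    unfolding G_def[abs_def] by (rule indefinite_integral_continuous_1) (rule AI_int[OF gAI])
  have lf: "loc_int L f" and lg: "loc_int L g" using wd by (auto simp: weak_deriv_def)
  define k where "k x = f x - G x" for x
  have lk: "loc_int L k"
    unfolding loc_int_def
  proof (intro allI impI)
    fix a b :: real assume ab: "0 < a" "b < L"
    have "integrable (lebesgue_on {a..b}) f" using lf ab by (simp add: loc_int_def)
    moreover have "integrable (lebesgue_on {a..b}) G"
      by (rule continuous_imp_integrable_real, rule continuous_on_subset[OF Gc]) (use ab in auto)
    ultimately show "integrable (lebesgue_on {a..b}) k" unfolding k_def[abs_def] by simp
  qed
  have H: "(\<integral>x. k x * deriv \<phi> x \<partial>lebesgue_on {0..L}) = 0" if tf: "test_fun L \<phi>" for \<phi>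
  proof -
    obtain a b where ab: "0 < a" "a \<le> b" "b < L" and sm: "\<And>n. sm n \<phi>" and z: "\<And>x. x \<notin> {a..b} \<Longrightarrow> \<phi> x = 0"
      and dz: "\<And>x. x \<notin> {a..b} \<Longrightarrow> deriv \<phi> x = 0"
      using tf by (rule tf_props) blast
    have dc: "continuous_on S (deriv \<phi>)" for S by (rule sm_all_deriv_cont[OF sm])
    have pc: "continuous_on S \<phi>" for S by (rule sm_all_cont[OF sm])
    have dphi: "(\<phi> has_real_derivative deriv \<phi> x) (at x)" for x
      using sm[of 1] by (simp add: sm_Suc DERIV_deriv_iff_real_differentiable)
    have i1: "integrable (lebesgue_on {0..L}) (\<lambda>x. f x * deriv \<phi> x)"
      by (rule locprod(3)[OF lf ab dc dz])
    have i2: "integrable (lebesgue_on {0..L}) (\<lambda>x. G x * deriv \<phi> x)"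
      by (intro continuous_imp_integrable_real continuous_on_mult Gc dc)
    have "(\<integral>x. k x * deriv \<phi> x \<partial>lebesgue_on {0..L})
        = (\<integral>x. f x * deriv \<phi> x - G x * deriv \<phi> x \<partial>lebesgue_on {0..L})"
      by (simp add: k_def algebra_simps)
    also have "\<dots> = (\<integral>x. f x * deriv \<phi> x \<partial>lebesgue_on {0..L}) - (\<integral>x. G x * deriv \<phi> x \<partial>lebesgue_on {0..L})"
      using i1 i2 by simp
    also have "(\<integral>x. f x * deriv \<phi> x \<partial>lebesgue_on {0..L}) = - (\<integral>x. g x * \<phi> x \<partial>lebesgue_on {0..L})"
      using wd tf unfolding weak_deriv_def by blast
    also have "(\<integral>x. g x * \<phi> x \<partial>lebesgue_on {0..L}) = integral {0..L} (\<lambda>x. g x * \<phi> x)"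
      by (rule LintHK) (simp add: intL_iff AI_mult_cont[OF gAI pc])
    also have "\<dots> = G L * \<phi> L - integral {0..L} (\<lambda>x. G x * deriv \<phi> x)"
    proof -
      have "\<And>x. x \<in> {0..L} \<Longrightarrow> (\<phi> has_real_derivative deriv \<phi> x) (at x within {0..L})"
        using dphi has_field_derivative_at_within by blast
      from IBP[OF less_imp_le[OF L] gAI this dc] show ?thesis by (simp add: G_def)
    qed
    also have "\<phi> L = 0" using z ab by auto
    also have "(\<integral>x. G x * deriv \<phi> x \<partial>lebesgue_on {0..L}) = integral {0..L} (\<lambda>x. G x * deriv \<phi> x)"
      by (rule LintHK[OF i2])
    finally show ?thesis by simp
  qed
  obtain C where C: "AE x in lebesgue_on {0..L}. k x = C"
    using dbr_lemma[OF L lk H] by blast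
  show ?thesis
    by (rule exI[of _ C]) (use C in \<open>eventually_elim, simp add: k_def G_def\<close>)
qed

lemma REP:
  assumes L: "L > 0" and wd: "weak_deriv L f f'" and gAI: "g absolutely_integrable_on {0..L}"
    and ae: "AE x in lebesgue_on {0..L}. f' x = g x"
  shows "\<exists>c. AE x in lebesgue_on {0..L}. f x = c + integral {0..x} g"
  by (rule REP0[OF L WD_cong[OF wd ae AI_loc[OF gAI]] gAI])


lemma L2_meas: "L2 L h \<Longrightarrow> h \<in> borel_measurable (lebesgue_on {0..L})"
  by (simp add: L2_def)

lemma one_int: "integrable (lebesgue_on {a..b::real}) (\<lambda>x. 1::real)"
  by (rule continuous_imp_integrable_real) (rule continuous_on_const)

lemma L2_int: "L2 L h \<Longrightarrow> integrable (lebesgue_on {0..L}) h"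
proof -
  assume h: "L2 L h"
  have i: "integrable (lebesgue_on {0..L}) (\<lambda>x. 1 + (h x)^2)"
    using h one_int by (simp add: L2_def)
  have b: "\<bar>h x\<bar> \<le> \<bar>1 + (h x)^2\<bar>" for x
  proof -
    have "0 \<le> (\<bar>h x\<bar> - 1/2)^2 + 3/4" by simp
    then have "\<bar>h x\<bar> \<le> 1 + \<bar>h x\<bar>^2" by (simp add: power2_eq_square algebra_simps)
    then show ?thesis by simp
  qed
  show ?thesis
    by (rule Bochner_Integration.integrable_bound[OF i L2_meas[OF h]]) (use b in simp)
qed

lemma L2_AI: "L2 L h \<Longrightarrow> h absolutely_integrable_on {0..L}"
  using L2_int intL_iff by blast

lemma L2_prod: "L2 L f \<Longrightarrow> L2 L g \<Longrightarrow> integrable (lebesgue_on {0..L}) (\<lambda>x. f x * g x)"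
proof -
  assume f: "L2 L f" and g: "L2 L g"
  have i: "integrable (lebesgue_on {0..L}) (\<lambda>x. (f x)^2 + (g x)^2)"
    using f g by (simp add: L2_def)
  have m: "(\<lambda>x. f x * g x) \<in> borel_measurable (lebesgue_on {0..L})"
    using L2_meas[OF f] L2_meas[OF g] by (rule borel_measurable_times)
  have b: "\<bar>f x * g x\<bar> \<le> \<bar>(f x)^2 + (g x)^2\<bar>" for x
  proof -
    have "0 \<le> (\<bar>f x\<bar> - \<bar>g x\<bar>)^2" by simp
    then have "2 * (\<bar>f x\<bar> * \<bar>g x\<bar>) \<le> (f x)^2 + (g x)^2"
      by (simp add: power2_eq_square algebra_simps)
    moreover have "\<bar>f x\<bar> * \<bar>g x\<bar> \<ge> 0" by simp
    ultimately have "\<bar>f x\<bar> * \<bar>g x\<bar> \<le> (f x)^2 + (g x)^2" by linarith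
    then show ?thesis by (simp add: abs_mult)
  qed
  show ?thesis
    by (rule Bochner_Integration.integrable_bound[OF i m]) (use b in simp)
qed

lemma cont_ae_eq:
  fixes F1 F2 :: "real \<Rightarrow> real"
  assumes L: "L > 0" and c: "continuous_on {0..L} F1" "continuous_on {0..L} F2"
    and ae: "AE x in lebesgue_on {0..L}. F1 x = F2 x" and x: "x \<in> {0..L}"
  shows "F1 x = F2 x"
proof -
  define H where "H t = F1 t - F2 t" for t
  have Hc: "continuous_on {0..L} H" unfolding H_def[abs_def] by (intro continuous_on_diff c)
  obtain N where N: "negligible N" "\<forall>t\<in>{0..L}. t \<notin> N \<longrightarrow> F1 t = F2 t"
    using AE_neg[OF ae] by blast
  have I0: "integral {0..u} H = 0" if "u \<in> {0..L}" for u
  proof -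
    have "integral {0..u} H = integral {0..u} (\<lambda>_. 0::real)"
      by (rule integral_spike[OF N(1)]) (use N(2) that in \<open>auto simp: H_def\<close>)
    then show ?thesis by simp
  qed
  have d1: "((\<lambda>u. integral {0..u} H) has_vector_derivative H x) (at x within cbox 0 L)"
    using integral_has_vector_derivative[OF Hc x] by simp
  have d2: "((\<lambda>u. integral {0..u} H) has_vector_derivative 0) (at x within cbox 0 L)"
  proof -
    have "((\<lambda>u. 0::real) has_vector_derivative 0) (at x within cbox 0 L)" by simp
    then show ?thesis
      by (rule has_vector_derivative_transform_within[where d=1]) (use I0 x in \<open>auto\<close>)
  qed
  have "H x = 0"
    by (rule vector_derivative_unique_within_closed_interval[OF L _ d1 d2]) (use x in auto)
  then show ?thesis by (simp add: H_def)
qed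

lemma prim_deriv:
  fixes g :: "real \<Rightarrow> real"
  assumes "continuous_on {0..L} g" "x \<in> {0..L}"
  shows "((\<lambda>x. c + integral {0..x} g) has_real_derivative g x) (at x within {0..L})"
proof -
  have "((\<lambda>u. integral {0..u} g) has_vector_derivative g x) (at x within {0..L})"
    by (rule integral_has_vector_derivative[OF assms])
  then have "((\<lambda>u. integral {0..u} g) has_real_derivative g x) (at x within {0..L})"
    by (simp add: has_real_derivative_iff_has_vector_derivative)
  then show ?thesis by (auto intro!: derivative_eq_intros)
qed

lemma prim_cont:
  fixes g :: "real \<Rightarrow> real"
  assumes "g integrable_on {0..L}"
  shows "continuous_on {0..L} (\<lambda>x. c + integral {0..x} g)"
  by (intro continuous_on_add continuous_on_const indefinite_integral_continuous_1[OF assms])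

lemma ftc0:
  fixes F F' :: "real \<Rightarrow> real"
  assumes "0 \<le> L" "\<And>x. x \<in> {0..L} \<Longrightarrow> (F has_real_derivative F' x) (at x within {0..L})"
  shows "integral {0..L} F' = F L - F 0"
proof -
  have "(F' has_integral (F L - F 0)) {0..L}"
    by (rule fundamental_theorem_of_calculus[OF assms(1)])
       (use assms(2) in \<open>simp add: has_real_derivative_iff_has_vector_derivative\<close>)
  then show ?thesis by (rule integral_unique)
qed


lemma core:
  assumes L: "L > 0" and h: "is_H02 L f f1 f2" and w3: "weak_deriv L f2 f3"
    and w4: "weak_deriv L f3 f4" and l4: "L2 L f4"
  shows "ip L f4 f = ip L f2 f2"
proof -
  from h obtain G G1 where H2: "is_H2 L f f1 f2" and cG: "continuous_on {0..L} G" "continuous_on {0..L} G1"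
    and aeG: "AE x in lebesgue_on {0..L}. G x = f x" "AE x in lebesgue_on {0..L}. G1 x = f1 x"
    and bc: "G 0 = 0" "G L = 0" "G1 0 = 0" "G1 L = 0"
    unfolding is_H02_def by blast
  from H2 have l0: "L2 L f" "L2 L f1" "L2 L f2" and w1: "weak_deriv L f f1" and w2: "weak_deriv L f1 f2"
    unfolding is_H2_def by auto
  have L0: "0 \<le> L" using L by simp
  have a4: "f4 absolutely_integrable_on {0..L}" by (rule L2_AI[OF l4])
  obtain c3 where e3: "AE x in lebesgue_on {0..L}. f3 x = c3 + integral {0..x} f4"
    using REP[OF L w4 a4] by auto
  define Y3 where "Y3 x = c3 + integral {0..x} f4" for x
  have cY3: "continuous_on {0..L} Y3" unfolding Y3_def[abs_def] by (rule prim_cont[OF AI_int[OF a4]])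
  have e3': "AE x in lebesgue_on {0..L}. f3 x = Y3 x" using e3 by (simp add: Y3_def)
  obtain c2 where e2: "AE x in lebesgue_on {0..L}. f2 x = c2 + integral {0..x} Y3"
    using REP[OF L w3 AI_cont[OF cY3] e3'] by auto
  define Y2 where "Y2 x = c2 + integral {0..x} Y3" for x
  have cY2: "continuous_on {0..L} Y2" unfolding Y2_def[abs_def] by (rule prim_cont[OF integrable_continuous_interval[OF cY3]])
  have dY2: "\<And>x. x \<in> {0..L} \<Longrightarrow> (Y2 has_real_derivative Y3 x) (at x within {0..L})"
    unfolding Y2_def[abs_def] by (rule prim_deriv[OF cY3])
  have e2': "AE x in lebesgue_on {0..L}. f2 x = Y2 x" using e2 by (simp add: Y2_def)
  obtain c1 where e1: "AE x in lebesgue_on {0..L}. f1 x = c1 + integral {0..x} Y2"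
    using REP[OF L w2 AI_cont[OF cY2] e2'] by auto
  define Y1 where "Y1 x = c1 + integral {0..x} Y2" for x
  have cY1: "continuous_on {0..L} Y1" unfolding Y1_def[abs_def] by (rule prim_cont[OF integrable_continuous_interval[OF cY2]])
  have dY1: "\<And>x. x \<in> {0..L} \<Longrightarrow> (Y1 has_real_derivative Y2 x) (at x within {0..L})"
    unfolding Y1_def[abs_def] by (rule prim_deriv[OF cY2])
  have e1': "AE x in lebesgue_on {0..L}. f1 x = Y1 x" using e1 by (simp add: Y1_def)
  obtain c0 where e0: "AE x in lebesgue_on {0..L}. f x = c0 + integral {0..x} Y1"
    using REP[OF L w1 AI_cont[OF cY1] e1'] by auto
  define Y0 where "Y0 x = c0 + integral {0..x} Y1" for x
  have cY0: "continuous_on {0..L} Y0" unfolding Y0_def[abs_def] by (rule prim_cont[OF integrable_continuous_interval[OF cY1]])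
  have dY0: "\<And>x. x \<in> {0..L} \<Longrightarrow> (Y0 has_real_derivative Y1 x) (at x within {0..L})"
    unfolding Y0_def[abs_def] by (rule prim_deriv[OF cY1])
  have e0': "AE x in lebesgue_on {0..L}. f x = Y0 x" using e0 by (simp add: Y0_def)
  have GY0: "G x = Y0 x" if "x \<in> {0..L}" for x
  proof (rule cont_ae_eq[OF L cG(1) cY0 _ that])
    show "AE x in lebesgue_on {0..L}. G x = Y0 x" using aeG(1) e0' by eventually_elim simp
  qed
  have GY1: "G1 x = Y1 x" if "x \<in> {0..L}" for x
  proof (rule cont_ae_eq[OF L cG(2) cY1 _ that])
    show "AE x in lebesgue_on {0..L}. G1 x = Y1 x" using aeG(2) e1' by eventually_elim simp
  qed
  have Y0b: "Y0 0 = 0" "Y0 L = 0" using GY0[of 0] GY0[of L] bc L by auto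
  have Y1b: "Y1 0 = 0" "Y1 L = 0" using GY1[of 0] GY1[of L] bc L by auto
  have intY1: "integral {0..L} Y1 = 0" using ftc0[OF L0 dY0] Y0b by simp
  have intY2: "integral {0..L} Y2 = 0" using ftc0[OF L0 dY1] Y1b by simp
  have ci: "continuous_on {0..L} F \<Longrightarrow> F integrable_on {0..L}" for F :: "real \<Rightarrow> real"
    by (rule integrable_continuous_interval)
  have "ip L f4 f = (\<integral>x. f4 x * Y0 x \<partial>lebesgue_on {0..L})"
    unfolding ip_def
  proof (rule integral_cong_AE)
    show "(\<lambda>x. f4 x * f x) \<in> borel_measurable (lebesgue_on {0..L})"
      by (rule borel_measurable_integrable[OF L2_prod[OF l4 l0(1)]])
    have "integrable (lebesgue_on {0..L}) (\<lambda>x. f4 x * Y0 x)"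
      using AI_mult_cont[OF a4 cY0] intL_iff by blast
    then show "(\<lambda>x. f4 x * Y0 x) \<in> borel_measurable (lebesgue_on {0..L})"
      by (rule borel_measurable_integrable)
    show "AE x in lebesgue_on {0..L}. f4 x * f x = f4 x * Y0 x" using e0' by eventually_elim simp
  qed
  also have "\<dots> = integral {0..L} (\<lambda>x. f4 x * Y0 x)"
    by (rule LintHK) (use AI_mult_cont[OF a4 cY0] intL_iff in blast)
  also have "\<dots> = integral {0..L} f4 * Y0 L - integral {0..L} (\<lambda>t. integral {0..t} f4 * Y1 t)"
    by (rule IBP[OF L0 a4 dY0 cY1])
  also have "\<dots> = - integral {0..L} (\<lambda>t. Y3 t * Y1 t - c3 * Y1 t)"
    using Y0b by (simp add: Y3_def algebra_simps)
  also have "integral {0..L} (\<lambda>t. Y3 t * Y1 t - c3 * Y1 t) = integral {0..L} (\<lambda>t. Y3 t * Y1 t) - c3 * integral {0..L} Y1"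
    by (subst Henstock_Kurzweil_Integration.integral_diff)
       (auto intro!: ci continuous_on_mult cY3 cY1 continuous_on_const)
  also have "integral {0..L} (\<lambda>t. Y3 t * Y1 t) = integral {0..L} Y3 * Y1 L - integral {0..L} (\<lambda>t. integral {0..t} Y3 * Y2 t)"
    by (rule IBP[OF L0 AI_cont[OF cY3] dY1 cY2])
  also have "\<dots> = - integral {0..L} (\<lambda>t. Y2 t * Y2 t - c2 * Y2 t)"
    using Y1b by (simp add: Y2_def algebra_simps)
  also have "integral {0..L} (\<lambda>t. Y2 t * Y2 t - c2 * Y2 t) = integral {0..L} (\<lambda>t. Y2 t * Y2 t) - c2 * integral {0..L} Y2"
    by (subst Henstock_Kurzweil_Integration.integral_diff)
       (auto intro!: ci continuous_on_mult cY2 continuous_on_const)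
  finally have lhs: "ip L f4 f = integral {0..L} (\<lambda>t. Y2 t * Y2 t)" using intY1 intY2 by simp
  have "ip L f2 f2 = (\<integral>x. Y2 x * Y2 x \<partial>lebesgue_on {0..L})"
    unfolding ip_def
  proof (rule integral_cong_AE)
    show "(\<lambda>x. f2 x * f2 x) \<in> borel_measurable (lebesgue_on {0..L})"
      by (rule borel_measurable_integrable[OF L2_prod[OF l0(3) l0(3)]])
    have "integrable (lebesgue_on {0..L}) (\<lambda>x. Y2 x * Y2 x)"
      by (intro continuous_imp_integrable_real continuous_on_mult cY2)
    then show "(\<lambda>x. Y2 x * Y2 x) \<in> borel_measurable (lebesgue_on {0..L})"
      by (rule borel_measurable_integrable)
    show "AE x in lebesgue_on {0..L}. f2 x * f2 x = Y2 x * Y2 x" using e2' by eventually_elim simp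
  qed
  also have "\<dots> = integral {0..L} (\<lambda>x. Y2 x * Y2 x)"
    by (rule LintHK) (intro continuous_imp_integrable_real continuous_on_mult cY2)
  finally show ?thesis using lhs by simp
qed


definition bb :: "real \<Rightarrow> nat \<Rightarrow> real" where
  "bb s j = (real j + 1) powr s - (real j) powr s"

lemma bb_nonneg: "0 \<le> s \<Longrightarrow> 0 \<le> bb s j"
  unfolding bb_def using powr_mono2[of s "real j" "real j + 1"] by simp

lemma bb_0: "bb s 0 = 1"
  by (simp add: bb_def)

lemma bb_dec:
  assumes s: "0 < s" "s < 1"
  shows "bb s (Suc j) \<le> bb s j"
proof (cases j)
  case 0
  have "2 powr s \<le> (2::real) powr 1" by (rule powr_mono) (use s in auto)
  then show ?thesis using 0 by (simp add: bb_def)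
next
  case (Suc i)
  define h where "h x = (x + 1) powr s - x powr s" for x :: real
  have "h (real j + 1) \<le> h (real j)"
  proof (rule DERIV_nonpos_imp_nonincreasing[of "real j" "real j + 1" h])
    fix x assume x: "real j \<le> x" "x \<le> real j + 1"
    then have xp: "x > 0" using Suc by simp
    have "(h has_real_derivative s * (x + 1) powr (s - 1) - s * x powr (s - 1)) (at x)"
      unfolding h_def[abs_def] using xp
      by (auto intro!: derivative_eq_intros DERIV_chain2[OF has_real_derivative_powr])
    moreover have "(x + 1) powr (s - 1) \<le> x powr (s - 1)"
      by (rule powr_mono2') (use xp s in auto)
    then have "s * (x + 1) powr (s - 1) - s * x powr (s - 1) \<le> 0"
      using s by (simp add: mult_left_mono)
    ultimately show "\<exists>y. (h has_real_derivative y) (at x) \<and> y \<le> 0" by blast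
  qed simp
  then show ?thesis by (simp add: h_def bb_def add.commute add.left_commute)
qed

lemma bb_le1:
  fixes s :: real and j :: nat
  shows "0 < s \<Longrightarrow> s < 1 \<Longrightarrow> bb s j \<le> 1"
proof (induction j)
  case 0 then show ?case by (simp add: bb_0)
next
  case (Suc j) then show ?case using bb_dec[of s j] by simp
qed

lemma telescope:
  fixes p :: nat and f :: "nat \<Rightarrow> real"
  shows "p \<ge> 1 \<Longrightarrow> (\<Sum>j=1..p-1. (f j - f (j+1))) = f 1 - (f p :: real)"
proof (induction p)
  case 0 then show ?case by simp
next
  case (Suc p)
  show ?case
  proof (cases "p = 0")
    case True then show ?thesis by simp
  next
    case False
    then have "(\<Sum>j=1..Suc p - 1. (f j - f (j+1))) = (\<Sum>j=1..p-1. (f j - f (j+1))) + (f p - f (p+1))"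
      by (cases p) (auto simp: sum.atLeast_Suc_atMost_Suc_shift)
    then show ?thesis using Suc False by simp
  qed
qed

lemma quad_CS:
  fixes A B P :: real
  assumes q: "\<And>t. 0 \<le> A - 2 * t * P + t^2 * B" and A: "A \<ge> 0" and B: "B \<ge> 0"
  shows "P \<le> sqrt A * sqrt B"
proof -
  have "P^2 \<le> A * B"
  proof (cases "B = 0")
    case True
    have "P = 0"
    proof (rule ccontr)
      assume "P \<noteq> 0"
      then have "0 \<le> A - 2 * ((A+1)/(2*P)) * P" using q[of "(A+1)/(2*P)"] True by simp
      then show False using \<open>P \<noteq> 0\<close> by (simp add: field_simps)
    qed
    then show ?thesis using A B by simp
  next
    case False
    then have Bp: "B > 0" using B by simp
    have "0 \<le> A - 2 * (P/B) * P + (P/B)^2 * B" by (rule q)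
    then have "0 \<le> A - P^2 / B" using Bp by (simp add: power2_eq_square field_simps)
    then show ?thesis using Bp by (simp add: field_simps)
  qed
  then have "sqrt (P^2) \<le> sqrt (A * B)" by (rule real_sqrt_le_mono)
  then show ?thesis by (simp add: real_sqrt_mult)
qed

lemma ip_self_nonneg: "ip L f f \<ge> 0"
  unfolding ip_def by (rule Bochner_Integration.integral_nonneg) simp

lemma norm0_sq: "(norm0 L f)^2 = ip L f f"
  unfolding norm0_def using ip_self_nonneg by simp

lemma norm0_nonneg: "norm0 L f \<ge> 0"
  unfolding norm0_def using ip_self_nonneg[of L f] by simp

lemma CS:
  assumes f: "L2 L f" and g: "L2 L g"
  shows "ip L f g \<le> norm0 L f * norm0 L g"
  unfolding norm0_def
proof (rule quad_CS[OF _ ip_self_nonneg ip_self_nonneg])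
  fix t :: real
  have i1: "integrable (lebesgue_on {0..L}) (\<lambda>x. f x * f x)" by (rule L2_prod[OF f f])
  have i2: "integrable (lebesgue_on {0..L}) (\<lambda>x. f x * g x)" by (rule L2_prod[OF f g])
  have i3: "integrable (lebesgue_on {0..L}) (\<lambda>x. g x * g x)" by (rule L2_prod[OF g g])
  have "0 \<le> (\<integral>x. (f x - t * g x) * (f x - t * g x) \<partial>lebesgue_on {0..L})"
    by (rule Bochner_Integration.integral_nonneg) simp
  also have "(\<integral>x. (f x - t * g x) * (f x - t * g x) \<partial>lebesgue_on {0..L})
      = (\<integral>x. f x * f x - (2 * t) * (f x * g x) + t^2 * (g x * g x) \<partial>lebesgue_on {0..L})"
    by (rule Bochner_Integration.integral_cong) (auto simp: algebra_simps power2_eq_square)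
  also have "\<dots> = ip L f f - 2 * t * ip L f g + t^2 * ip L g g"
    using i1 i2 i3 by (simp add: ip_def)
  finally show "0 \<le> ip L f f - 2 * t * ip L f g + t^2 * ip L g g" .
qed


lemma norm0_le_norm2: "0 \<le> c \<Longrightarrow> norm0 L f \<le> norm2 L \<beta> \<alpha> f f2" if "0 \<le> \<beta> * \<alpha>" for c
proof -
  have "sqrt ((norm0 L f)^2) \<le> sqrt ((norm0 L f)^2 + \<beta> * \<alpha> * (norm0 L f2)^2)"
    using that by (intro real_sqrt_le_mono) simp
  then show ?thesis using norm0_nonneg[of L f] by (simp add: norm2_def)
qed

lemma norm2_sq: "0 \<le> \<beta> * \<alpha> \<Longrightarrow> (norm2 L \<beta> \<alpha> f f2)^2 = (norm0 L f)^2 + \<beta> * \<alpha> * (norm0 L f2)^2"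
  unfolding norm2_def by (simp add: add_nonneg_nonneg)

lemma norm2_nonneg: "0 \<le> \<beta> * \<alpha> \<Longrightarrow> norm2 L \<beta> \<alpha> f f2 \<ge> 0"
  unfolding norm2_def by simp

lemma final_ineq:
  fixes N N0 R :: real
  assumes "N^2 \<le> R * N0" "0 \<le> N0" "N0 \<le> N" "0 \<le> R" "0 \<le> N"
  shows "N \<le> R"
proof (cases "N = 0")
  case True then show ?thesis using assms by simp
next
  case False
  then have Np: "N > 0" using assms by simp
  have "N * N \<le> R * N" using assms(1,3,4) by (simp add: power2_eq_square) (meson mult_left_mono order_trans)
  then show ?thesis using Np by simp
qed

theorem theorem1:
  fixes L \<gamma> \<alpha> \<Delta>t \<beta> :: real and K :: nat and b :: "nat \<Rightarrow> real"
    and y y1 y2 y3 y4 u :: "nat \<Rightarrow> real \<Rightarrow> real"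
  assumes "L > 0" and "0 < \<gamma>" and "\<gamma> < 1" and "\<alpha> > 0" and "K \<ge> 1" and "\<Delta>t > 0"
    and \<beta>_def: "\<beta> = Gamma (2 - \<gamma>) * \<Delta>t powr \<gamma>"
    and b_def: "\<And>j. b j = (real j + 1) powr (1 - \<gamma>) - (real j) powr (1 - \<gamma>)"
    and "L2 L (y 0)"
    and "\<And>j. j \<in> {1..K} \<Longrightarrow> L2 L (u j)"
    and "\<And>j. j \<in> {1..K} \<Longrightarrow> is_H02 L (y j) (y1 j) (y2 j) \<and> weak_deriv L (y2 j) (y3 j)
                              \<and> weak_deriv L (y3 j) (y4 j) \<and> L2 L (y4 j)"
    and "\<And>g. g \<in> H02 L \<Longrightarrow>
           ip L (y 1) g + \<beta> * \<alpha> * ip L (y4 1) g = ip L (y 0) g + \<beta> * ip L (u 1) g"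
    and "\<And>p g. p \<in> {1..K-1} \<Longrightarrow> g \<in> H02 L \<Longrightarrow>
           ip L (y (p+1)) g + \<beta> * \<alpha> * ip L (y4 (p+1)) g =
             (1 - b 1) * ip L (y p) g + (\<Sum>j=1..p-1. (b j - b (j+1)) * ip L (y (p-j)) g)
             + b p * ip L (y 0) g + \<beta> * ip L (u (p+1)) g"
  shows "\<forall>p < K. norm2 L \<beta> \<alpha> (y (p+1)) (y2 (p+1))
                  \<le> norm0 L (y 0) + \<beta> * (\<Sum>j=1..p+1. norm0 L (u j))"
proof -
  have L: "L > 0" using assms(1) .
  have bpos: "\<beta> > 0" unfolding \<beta>_def using assms(2,3,6) by (intro mult_pos_pos Gamma_real_pos) auto
  have ba: "0 \<le> \<beta> * \<alpha>" using bpos assms(4) by simp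
  have s: "0 < 1 - \<gamma>" "1 - \<gamma> < 1" using assms(2,3) by auto
  have bbb: "b j = bb (1 - \<gamma>) j" for j by (simp add: b_def bb_def)
  have b_nn: "b j \<ge> 0" for j unfolding bbb using bb_nonneg s by simp
  have b_dec: "b (j+1) \<le> b j" for j unfolding bbb using bb_dec[OF s, of j] by simp
  have b_le1: "b j \<le> 1" for j unfolding bbb using bb_le1[OF s] by simp
  define R where "R n = norm0 L (y 0) + \<beta> * (\<Sum>j=1..n. norm0 L (u j))" for n
  have R_mono: "R m \<le> R n" if "m \<le> n" for m n
  proof -
    have "(\<Sum>j=1..m. norm0 L (u j)) \<le> (\<Sum>j=1..n. norm0 L (u j))"
      by (rule sum_mono2) (use that norm0_nonneg in auto)
    then show ?thesis unfolding R_def using bpos by simp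
  qed
  have R0: "norm0 L (y 0) \<le> R n" for n
  proof -
    have "0 \<le> (\<Sum>j=1..n. norm0 L (u j))" by (rule sum_nonneg) (simp add: norm0_nonneg)
    then show ?thesis unfolding R_def using bpos by simp
  qed
  have Rnn: "0 \<le> R n" for n using R0[of n] norm0_nonneg[of L "y 0"] by simp
  have RSuc: "R (Suc p) = R p + \<beta> * norm0 L (u (Suc p))" for p
    by (simp add: R_def algebra_simps)
  have claim: "1 \<le> n \<longrightarrow> n \<le> K \<longrightarrow> norm2 L \<beta> \<alpha> (y n) (y2 n) \<le> R n" for n
  proof (induction n rule: less_induct)
    case (less n)
    show ?case
    proof (intro impI)
      assume n1: "1 \<le> n" and nK: "n \<le> K"
      have nin: "n \<in> {1..K}" using n1 nK by simp
      from assms(11)[OF nin] have Hn: "is_H02 L (y n) (y1 n) (y2 n)" "weak_deriv L (y2 n) (y3 n)"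
        "weak_deriv L (y3 n) (y4 n)" "L2 L (y4 n)" by auto
      have gH: "y n \<in> H02 L" using Hn(1) unfolding H02_def by blast
      have Ly: "L2 L (y n)" and Ly2: "L2 L (y2 n)" using Hn(1) by (auto simp: is_H02_def is_H2_def)
      have co: "ip L (y4 n) (y n) = ip L (y2 n) (y2 n)" by (rule core[OF L Hn])
      define N0 where "N0 = norm0 L (y n)"
      define N where "N = norm2 L \<beta> \<alpha> (y n) (y2 n)"
      have LHS: "ip L (y n) (y n) + \<beta> * \<alpha> * ip L (y4 n) (y n) = N^2"
        unfolding N_def using norm2_sq[OF ba] co norm0_sq by simp
      have N0N: "N0 \<le> N" unfolding N0_def N_def by (rule norm0_le_norm2[OF ba order_refl])
      have N0nn: "0 \<le> N0" unfolding N0_def by (rule norm0_nonneg)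
      have Nnn: "0 \<le> N" unfolding N_def by (rule norm2_nonneg[OF ba])
      have bound: "N^2 \<le> R n * N0"
      proof (cases "n = 1")
        case True
        have "N^2 = ip L (y 0) (y n) + \<beta> * ip L (u 1) (y n)"
          using LHS assms(12)[OF gH] True by simp
        also have "\<dots> \<le> norm0 L (y 0) * N0 + \<beta> * (norm0 L (u 1) * N0)"
        proof (rule add_mono)
          show "ip L (y 0) (y n) \<le> norm0 L (y 0) * N0" unfolding N0_def by (rule CS[OF assms(9) Ly])
          have "ip L (u 1) (y n) \<le> norm0 L (u 1) * N0"
            unfolding N0_def by (rule CS[OF assms(10) Ly]) (use assms(5) in simp)
          then show "\<beta> * ip L (u 1) (y n) \<le> \<beta> * (norm0 L (u 1) * N0)" using bpos by simp
        qed
        also have "\<dots> = R n * N0" using True by (simp add: R_def algebra_simps)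
        finally show ?thesis .
      next
        case False
        define p where "p = n - 1"
        have p: "1 \<le> p" "n = p + 1" "p \<in> {1..K-1}" using False n1 nK by (auto simp: p_def)
        have yk: "ip L (y k) (y n) \<le> R p * N0" if "k \<le> p" for k
        proof -
          have Lk: "L2 L (y k)"
          proof (cases "k = 0")
            case True then show ?thesis using assms(9) by simp
          next
            case False
            then have "k \<in> {1..K}" using that p nK by auto
            from assms(11)[OF this] show ?thesis by (auto simp: is_H02_def is_H2_def)
          qed
          have nk: "norm0 L (y k) \<le> R p"
          proof (cases "k = 0")
            case True then show ?thesis using R0 by simp
          next
            case False
            have "norm2 L \<beta> \<alpha> (y k) (y2 k) \<le> R k" using less.IH[of k] False that p by auto
            moreover have "norm0 L (y k) \<le> norm2 L \<beta> \<alpha> (y k) (y2 k)" by (rule norm0_le_norm2[OF ba order_refl])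
            moreover have "R k \<le> R p" using R_mono that by simp
            ultimately show ?thesis by linarith
          qed
          have "ip L (y k) (y n) \<le> norm0 L (y k) * N0" unfolding N0_def by (rule CS[OF Lk Ly])
          also have "\<dots> \<le> R p * N0" using nk N0nn by (simp add: mult_right_mono)
          finally show ?thesis .
        qed
        have "N^2 = (1 - b 1) * ip L (y p) (y n) + (\<Sum>j=1..p-1. (b j - b (j+1)) * ip L (y (p-j)) (y n))
             + b p * ip L (y 0) (y n) + \<beta> * ip L (u (p+1)) (y n)"
          using LHS assms(13)[OF p(3) gH] p(2) by simp
        also have "\<dots> \<le> (1 - b 1) * (R p * N0) + (\<Sum>j=1..p-1. (b j - b (j+1)) * (R p * N0))
             + b p * (R p * N0) + \<beta> * (norm0 L (u (p+1)) * N0)"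
        proof (intro add_mono)
          show "(1 - b 1) * ip L (y p) (y n) \<le> (1 - b 1) * (R p * N0)"
            using yk[of p] b_le1[of 1] by (intro mult_left_mono) auto
          show "(\<Sum>j=1..p-1. (b j - b (j+1)) * ip L (y (p-j)) (y n)) \<le> (\<Sum>j=1..p-1. (b j - b (j+1)) * (R p * N0))"
            using yk b_dec by (intro sum_mono mult_left_mono) auto
          show "b p * ip L (y 0) (y n) \<le> b p * (R p * N0)"
            using yk[of 0] b_nn[of p] by (intro mult_left_mono) auto
          have "ip L (u (p+1)) (y n) \<le> norm0 L (u (p+1)) * N0"
            unfolding N0_def by (rule CS[OF assms(10) Ly]) (use p nK in auto)
          then show "\<beta> * ip L (u (p+1)) (y n) \<le> \<beta> * (norm0 L (u (p+1)) * N0)" using bpos by simp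
        qed
        also have "(\<Sum>j=1..p-1. (b j - b (j+1)) * (R p * N0)) = (b 1 - b p) * (R p * N0)"
          using telescope[OF p(1), of b] by (simp add: sum_distrib_right[symmetric])
        also have "(1 - b 1) * (R p * N0) + (b 1 - b p) * (R p * N0) + b p * (R p * N0)
             + \<beta> * (norm0 L (u (p+1)) * N0) = R n * N0"
          using RSuc[of p] p(2) by (simp add: algebra_simps)
        finally show ?thesis .
      qed
      have "N \<le> R n" by (rule final_ineq[OF _ N0nn N0N Rnn Nnn]) (use bound in \<open>simp add: mult.commute\<close>)
      then show "norm2 L \<beta> \<alpha> (y n) (y2 n) \<le> R n" by (simp add: N_def)
    qed
  qed
  show ?thesis
  proof (intro allI impI)
    fix p assume "p < K"
    then have "norm2 L \<beta> \<alpha> (y (p+1)) (y2 (p+1)) \<le> R (p+1)" using claim[of "p+1"] by simp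
    then show "norm2 L \<beta> \<alpha> (y (p+1)) (y2 (p+1)) \<le> norm0 L (y 0) + \<beta> * (\<Sum>j=1..p+1. norm0 L (u j))"
      by (simp add: R_def)
  qed
qed


end
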